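(* Let $\lambda\in F$ be an element whose reduced word in the dual generators is $\hat x_r^{\alpha_r}\cdots\hat x_1^{\alpha_1}$ ($\hat x_k\in\{\hat m_1,\ldots,\hat b_g\}$, $\alpha_k\in\{\pm1\}$), and whose reduced word in $m_i,a_j,b_j$ has the form $w\,z\,w'$, where $w,w'$ are reduced words in $m_i,a_j,b_j$ and $z\in\{m_1^{\pm1},\ldots,b_g^{\pm1}\}$ is a single letter. Write $P_j=h_{j-1}\cdots h_1m_n\cdots m_1$ and $P'_j=h_j\cdots h_1m_n\cdots m_1$. Then: (i) if $w'=m_i\cdots m_1$ and $\hat x_1^{\alpha_1}\neq\hat m_i^{-1}$, then $z\in\{m_{i+1}^{\pm1},\ldots,m_n^{\pm1},a_1^{\pm1},\ldots,b_g^{\pm1}\}$; (ii) if $w'=m_{i-1}\cdots m_1$ and $\hat x_1^{\alpha_1}\neq\hat m_i$, then $z\in\{m_1^{\pm1},\ldots,m_{i-1}^{\pm1},m_i\}$; (iii) if $w'=P_j$ and $\hat x_1^{\alpha_1}\neq\hat a_j$, then $z\in\{m_1^{\pm1},\ldots,b_{j-1}^{\pm1},a_j\}$; (iv) if $w'=a_jP_j$ and $\hat x_1^{\alpha_1}\neq\hat a_j$, then $z\in\{b_j^{-1},a_{j+1}^{\pm1},\ldots,b_g^{\pm1}\}$; (v) if $w'=a_j^{-1}b_j^{-1}a_jP_j$ and $\hat x_1^{\alpha_1}\neq\hat a_j^{-1}$, then $z\in\{a_j^{-1},b_j^{\pm1},a_{j+1}^{\pm1},\ldots,b_g^{\pm1}\}$;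 (vi) if $w'=b_j^{-1}a_jP_j$ and $\hat x_1^{\alpha_1}\neq\hat a_j^{-1}$, then $z\in\{m_1^{\pm1},\ldots,b_{j-1}^{\pm1},a_j^{\pm1}\}$; (vii) if $w'=b_j^{-1}a_jP_j$ and $\hat x_1^{\alpha_1}\neq\hat b_j$, then $z\in\{a_j^{-1},b_j^{-1},a_{j+1}^{\pm1},\ldots,b_g^{\pm1}\}$; (viii) if $w'=a_jP_j$ and $\hat x_1^{\alpha_1}\neq\hat b_j$, then $z\in\{m_1^{\pm1},\ldots,b_{j-1}^{\pm1},a_j,b_j^{\pm1}\}$; (ix) if $w'=a_j^{-1}b_j^{-1}a_jP_j$ and $\hat x_1^{\alpha_1}\neq\hat b_j^{-1}$, then $z\in\{m_1^{\pm1},\ldots,b_{j-1}^{\pm1},b_j\}$; (x) if $w'=P'_j$ and $\hat x_1^{\alpha_1}\neq\hat b_j^{-1}$, then $z\in\{a_{j+1}^{\pm1},\ldots,b_g^{\pm1}\}$. Here a set such as $\{m_1^{\pm1},\ldots,b_{j-1}^{\pm1}\}$ denotes all letters $m_1^{\pm1},\ldots,m_n^{\pm1},a_1^{\pm1},b_1^{\pm1},\ldots,a_{j-1}^{\pm1},b_{j-1}^{\pm1}$, listed in the order $m_1,\ldots,m_n,a_1,b_1,\ldots,a_g,b_g$.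
   Context: $F$ is the free group on $m_1,\ldots,m_n,a_1,b_1,\ldots,a_g,b_g$ (the fundamental group of a genus $g$ surface with $n$ punctures and a disc removed). Words are composed right to left. $h_j=b_ja_j^{-1}b_j^{-1}a_j$. The dual generators are $\hat m_i=m_1^{-1}\cdots m_{i-1}^{-1}m_i^{-1}m_{i-1}\cdots m_1$, $\hat a_j=m_1^{-1}\cdots m_n^{-1}h_1^{-1}\cdots h_j^{-1}b_jh_{j-1}\cdots h_1m_n\cdots m_1$, $\hat b_j=m_1^{-1}\cdots m_n^{-1}h_1^{-1}\cdots h_j^{-1}a_jh_{j-1}\cdots h_1m_n\cdots m_1$; they also freely generate $F$. *)

theory Defs
  imports Main
begin

text \<open>Elements are represented by
  reduced words.  A word is a list of letters written left to right exactly as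
  in the paper (so x_r ... x_1 is the list [x_r, ..., x_1]); a letter is a
  generator together with an exponent sign (True = +1, False = -1).\<close>

datatype gen = Mg nat | Ag nat | Bg nat

type_synonym letter = "gen \<times> bool"

definition inv_letter :: "'x \<times> bool \<Rightarrow> 'x \<times> bool" where
  "inv_letter l = (fst l, \<not> snd l)"

definition inv_word :: "('x \<times> bool) list \<Rightarrow> ('x \<times> bool) list" where
  "inv_word ws = rev (map inv_letter ws)"

definition reduced :: "('x \<times> bool) list \<Rightarrow> bool" where
  "reduced ws \<longleftrightarrow> (\<forall>k. Suc k < length ws \<longrightarrow> ws ! Suc k \<noteq> inv_letter (ws ! k))"

fun red_step :: "'x \<times> bool \<Rightarrow> ('x \<times> bool) list \<Rightarrow> ('x \<times> bool) list" where
  "red_step x [] = [x]"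
| "red_step x (y # ys) = (if y = inv_letter x then ys else x # y # ys)"

definition reduce :: "('x \<times> bool) list \<Rightarrow> ('x \<times> bool) list" where
  "reduce ws = foldr red_step ws []"

definition valid_gen :: "nat \<Rightarrow> nat \<Rightarrow> gen \<Rightarrow> bool" where
  "valid_gen n g x = (case x of Mg i \<Rightarrow> 1 \<le> i \<and> i \<le> n
                               | Ag j \<Rightarrow> 1 \<le> j \<and> j \<le> g
                               | Bg j \<Rightarrow> 1 \<le> j \<and> j \<le> g)"

definition mseq :: "nat \<Rightarrow> letter list" where
  "mseq i = rev (map (\<lambda>k. (Mg k, True)) [1..<Suc i])"

definition hword :: "nat \<Rightarrow> letter list" where
  "hword j = [(Bg j, True), (Ag j, False), (Bg j, False), (Ag j, True)]"

definition Pw :: "nat \<Rightarrow> nat \<Rightarrow> letter list" where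
  "Pw n j = concat (map hword (rev [1..<j])) @ mseq n"

definition P'w :: "nat \<Rightarrow> nat \<Rightarrow> letter list" where
  "P'w n j = concat (map hword (rev [1..<Suc j])) @ mseq n"

text \<open>Dual generators, as words in m_i, a_j, b_j.\<close>
fun hat_word :: "nat \<Rightarrow> gen \<Rightarrow> letter list" where
  "hat_word n (Mg i) = inv_word (mseq (i - 1)) @ [(Mg i, False)] @ mseq (i - 1)"
| "hat_word n (Ag j) = inv_word (P'w n j) @ [(Bg j, True)] @ Pw n j"
| "hat_word n (Bg j) = inv_word (P'w n j) @ [(Ag j, True)] @ Pw n j"

definition dual_exp :: "nat \<Rightarrow> letter \<Rightarrow> letter list" where
  "dual_exp n l = (if snd l then hat_word n (fst l) else inv_word (hat_word n (fst l)))"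

text \<open>The element of F represented by a word in the dual generators
  (as its reduced word in m_i, a_j, b_j).\<close>
definition dual_eval :: "nat \<Rightarrow> letter list \<Rightarrow> letter list" where
  "dual_eval n du = reduce (concat (map (dual_exp n) du))"

definition pm :: "gen set \<Rightarrow> letter set" where
  "pm S = {l. fst l \<in> S}"

definition Ms :: "nat \<Rightarrow> nat \<Rightarrow> gen set" where
  "Ms lo hi = {Mg k | k. lo \<le> k \<and> k \<le> hi}"

definition ABs :: "nat \<Rightarrow> nat \<Rightarrow> gen set" where
  "ABs lo hi = {Ag k | k. lo \<le> k \<and> k \<le> hi} \<union> {Bg k | k. lo \<le> k \<and> k \<le> hi}"

end

theory Submission
  imports Defs
begin

lemma inv_inv[simp]: "inv_letter (inv_letter x) = x"
  by (simp add: inv_letter_def)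

lemma inv_word_Nil[simp]: "inv_word [] = []" by (simp add: inv_word_def)
lemma inv_word_Cons[simp]: "inv_word (x # xs) = inv_word xs @ [inv_letter x]"
  by (simp add: inv_word_def)
lemma inv_word_append[simp]: "inv_word (xs @ ys) = inv_word ys @ inv_word xs"
  by (simp add: inv_word_def)
lemma inv_word_inv[simp]: "inv_word (inv_word xs) = xs"
  by (simp add: inv_word_def rev_map comp_def)

lemma reduced_Nil[simp]: "reduced []" by (simp add: reduced_def)
lemma reduced_single[simp]: "reduced [x]" by (simp add: reduced_def)
lemma reduced_CC[simp]: "reduced (x # y # ys) \<longleftrightarrow> y \<noteq> inv_letter x \<and> reduced (y # ys)"
  apply (simp add: reduced_def, safe)
    apply (metis One_nat_def nth_Cons_0 nth_Cons_Suc zero_less_Suc Suc_less_eq length_Cons)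
   apply (metis Suc_less_eq length_Cons nth_Cons_Suc)
  subgoal for k by (cases k) auto
  done

lemma reduced_Cons_tl: "reduced (x # ys) \<Longrightarrow> reduced ys"
  by (cases ys) auto

lemma reduced_append: "reduced (xs @ ys) \<longleftrightarrow> reduced xs \<and> reduced ys \<and>
   (xs \<noteq> [] \<longrightarrow> ys \<noteq> [] \<longrightarrow> hd ys \<noteq> inv_letter (last xs))"
proof (induction xs)
  case Nil then show ?case by simp
next
  case (Cons x xs)
  then show ?case
  proof (cases xs)
    case Nil then show ?thesis by (cases ys) auto
  next
    case (Cons y zs) then show ?thesis using Cons.IH by auto
  qed
qed

lemma reduced_inv_word: "reduced xs \<Longrightarrow> reduced (inv_word xs)"
proof (induction xs)
  case Nil then show ?case by simp
next
  case (Cons x xs)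
  then show ?case
    by (cases xs) (auto simp: reduced_append inv_word_def last_map last_rev hd_map hd_rev inv_letter_def)
qed

lemma red_step_reduced: "reduced r \<Longrightarrow> reduced (red_step x r)"
  by (cases r) (auto dest: reduced_Cons_tl)

lemma foldr_reduced: "reduced r \<Longrightarrow> reduced (foldr red_step a r)"
  by (induction a) (auto intro: red_step_reduced)

lemma reduce_reduced: "reduced (reduce w)"
  by (simp add: reduce_def foldr_reduced)

lemma cancel: "reduced r \<Longrightarrow> red_step x (red_step (inv_letter x) r) = r"
proof (cases r)
  case Nil then show ?thesis by simp
next
  case (Cons y ys)
  assume r: "reduced r"
  show ?thesis
  proof (cases "y = x")
    case True
    then show ?thesis using r Cons by (cases ys) auto
  next
    case False
    then show ?thesis using Cons by auto
  qed
qed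

lemma foldr_cancel: "reduced r \<Longrightarrow> foldr red_step m (foldr red_step (inv_word m) r) = r"
proof (induction m arbitrary: r)
  case Nil then show ?case by simp
next
  case (Cons x m)
  have "reduced (red_step (inv_letter x) r)" using Cons.prems by (rule red_step_reduced)
  then show ?case using Cons by (simp add: cancel)
qed

lemma R2: "reduce (a @ m @ inv_word m @ b) = reduce (a @ b)"
  by (simp add: reduce_def foldr_cancel foldr_reduced)

lemma R1: "reduced w \<Longrightarrow> reduce w = w"
proof (induction w)
  case Nil then show ?case by (simp add: reduce_def)
next
  case (Cons x w)
  then have "reduce w = w" by (auto dest: reduced_Cons_tl)
  then show ?case using Cons.prems by (cases w) (auto simp: reduce_def)
qed

lemma foldr_reduce: "reduced r \<Longrightarrow> foldr red_step a r = foldr red_step (reduce a) r"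
proof (induction a)
  case Nil then show ?case by (simp add: reduce_def)
next
  case (Cons x a)
  have rq: "reduced (reduce a)" by (rule reduce_reduced)
  have IH: "foldr red_step a r = foldr red_step (reduce a) r" using Cons by simp
  have "red_step x (foldr red_step (reduce a) r) = foldr red_step (red_step x (reduce a)) r"
  proof (cases "reduce a")
    case Nil then show ?thesis by simp
  next
    case (Cons y q)
    show ?thesis
    proof (cases "y = inv_letter x")
      case True
      have "reduced (foldr red_step q r)" using Cons.prems by (simp add: foldr_reduced)
      then show ?thesis using Cons True cancel[of "foldr red_step q r" x] by simp
    qed (use Cons in simp)
  qed
  then show ?case using IH by (simp add: reduce_def)
qed

lemma R5: "reduce (a @ b) = reduce (reduce a @ b)"
proof -
  have "reduce (a @ b) = foldr red_step a (reduce b)" by (simp add: reduce_def)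
  also have "\<dots> = foldr red_step (reduce a) (reduce b)" by (rule foldr_reduce[OF reduce_reduced])
  also have "\<dots> = reduce (reduce a @ b)" by (simp add: reduce_def)
  finally show ?thesis .
qed
  
lemma R4: "set (reduce w) \<subseteq> set w"
proof -
  have "set (foldr red_step w r) \<subseteq> set w \<union> set r" for r
  proof (induction w)
    case (Cons x w)
    have "set (red_step x q) \<subseteq> insert x (set q)" for q by (cases q) auto
    then show ?case using Cons by fastforce
  qed simp
  from this[of "[]"] show ?thesis by (simp add: reduce_def)
qed

definition ddh :: "nat \<Rightarrow> nat \<Rightarrow> letter" where
  "ddh q r = (if r = 0 then (Ag (Suc q), True) else if r = 1 then (Bg (Suc q), False)
      else if r = 2 then (Ag (Suc q), False) else (Bg (Suc q), True))"
definition dd :: "nat \<Rightarrow> nat \<Rightarrow> letter" where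
  "dd n k = (if k \<le> n then (Mg k, True) else ddh ((k - Suc n) div 4) ((k - Suc n) mod 4))"

lemma dd_M: "k \<le> n \<Longrightarrow> dd n k = (Mg k, True)" by (simp add: dd_def)
lemma dd_1: "dd n (n + 4*q + 1) = (Ag (Suc q), True)" by (simp add: dd_def ddh_def)
lemma dd_2: "dd n (n + 4*q + 2) = (Bg (Suc q), False)"
proof -
  have "n + 4*q + 2 - Suc n = 1 + 4*q" by simp
  moreover have "(1 + 4*q) div 4 = q" "(1 + 4*q) mod 4 = 1" by presburger+
  ultimately show ?thesis by (simp add: dd_def ddh_def)
qed
lemma dd_3: "dd n (n + 4*q + 3) = (Ag (Suc q), False)"
proof -
  have "n + 4*q + 3 - Suc n = 2 + 4*q" by simp
  moreover have "(2 + 4*q) div 4 = q" "(2 + 4*q) mod 4 = 2" by presburger+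
  ultimately show ?thesis by (simp add: dd_def ddh_def)
qed
lemma dd_4: "dd n (n + 4*q + 4) = (Bg (Suc q), True)"
proof -
  have "n + 4*q + 4 - Suc n = 3 + 4*q" by simp
  moreover have "(3 + 4*q) div 4 = q" "(3 + 4*q) mod 4 = 3" by presburger+
  ultimately show ?thesis by (simp add: dd_def ddh_def)
qed

lemma dd_cases: "(n::nat) < t \<Longrightarrow> \<exists>q. t = n + 4*q + 1 \<or> t = n + 4*q + 2 \<or> t = n + 4*q + 3 \<or> t = n + 4*q + 4"
proof -
  assume "n < t"
  define q where "q = (t - Suc n) div 4"
  define r where "r = (t - Suc n) mod 4"
  have t: "t = n + 4*q + 1 + r" using \<open>n < t\<close> unfolding q_def r_def by simp
  have "r < 4" unfolding r_def by simp
  then have "r = 0 \<or> r = 1 \<or> r = 2 \<or> r = 3" by auto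
  then show ?thesis using t by auto
qed

lemma dd_gen_ne: "1 \<le> t \<Longrightarrow> fst (dd n t) \<noteq> fst (dd n (Suc t))"
proof (cases "t \<le> n")
  case True
  assume "1 \<le> t"
  show ?thesis
  proof (cases "Suc t \<le> n")
    case True then show ?thesis using \<open>t \<le> n\<close> by (simp add: dd_M)
  next
    case False then have e: "Suc t = n + 4*0 + 1" using \<open>t \<le> n\<close> by simp
    have "dd n (Suc t) = (Ag 1, True)" unfolding e dd_1 by simp
    then show ?thesis using \<open>t \<le> n\<close> by (simp add: dd_M)
  qed
next
  case False
  then have "n < t" by simp
  from dd_cases[OF this] obtain q where
    "t = n + 4*q + 1 \<or> t = n + 4*q + 2 \<or> t = n + 4*q + 3 \<or> t = n + 4*q + 4" by blast
  then show ?thesis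
  proof (elim disjE)
    assume e: "t = n + 4*q + 1"
    have e2: "Suc t = n + 4*q + 2" using e by simp
    show ?thesis unfolding e2 unfolding e dd_1 dd_2 by simp
  next
    assume e: "t = n + 4*q + 2"
    have e2: "Suc t = n + 4*q + 3" using e by simp
    show ?thesis unfolding e2 unfolding e dd_3 dd_2 by simp
  next
    assume e: "t = n + 4*q + 3"
    have e2: "Suc t = n + 4*q + 4" using e by simp
    show ?thesis unfolding e2 unfolding e dd_3 dd_4 by simp
  next
    assume e: "t = n + 4*q + 4"
    have e2: "Suc t = n + 4 * Suc q + 1" using e by simp
    show ?thesis unfolding e2 unfolding e dd_4 dd_1 by simp
  qed
qed

definition SS :: "nat \<Rightarrow> nat \<Rightarrow> letter list" where
  "SS n t = map (dd n) (rev [1..<Suc t])"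

definition seg :: "nat \<Rightarrow> nat \<Rightarrow> nat \<Rightarrow> letter list" where
  "seg n a b = map (dd n) (rev [Suc a..<Suc b])"

lemma SS_0[simp]: "SS n 0 = []" by (simp add: SS_def)
lemma SS_Suc: "SS n (Suc t) = dd n (Suc t) # SS n t" by (simp add: SS_def)
lemma length_SS[simp]: "length (SS n t) = t" by (simp add: SS_def)

lemma SS_split: "a \<le> b \<Longrightarrow> SS n b = seg n a b @ SS n a"
proof -
  assume "a \<le> b"
  then have "[1..<Suc b] = [1..<Suc a] @ [Suc a..<Suc b]"
    using upt_add_eq_append[of 1 "Suc a" "b - a"] by simp
  then show ?thesis unfolding SS_def seg_def by simp
qed

lemma seg_self[simp]: "seg n a a = []" by (simp add: seg_def)
lemma seg_Suc: "a \<le> b \<Longrightarrow> seg n a (Suc b) = dd n (Suc b) # seg n a b"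
  by (simp add: seg_def)
lemma seg_split: "a \<le> b \<Longrightarrow> b \<le> c \<Longrightarrow> seg n a c = seg n b c @ seg n a b"
proof -
  assume "a \<le> b" "b \<le> c"
  then have "[Suc a..<Suc c] = [Suc a..<Suc b] @ [Suc b..<Suc c]"
    using upt_add_eq_append[of "Suc a" "Suc b" "c - b"] by simp
  then show ?thesis unfolding seg_def by simp
qed
lemma seg_last: "a < b \<Longrightarrow> seg n a b \<noteq> [] \<and> last (seg n a b) = dd n (Suc a)"
proof -
  assume "a < b"
  then have "seg n a b = seg n (Suc a) b @ seg n a (Suc a)" by (simp add: seg_split)
  moreover have "seg n a (Suc a) = [dd n (Suc a)]" by (simp add: seg_Suc)
  ultimately show ?thesis by simp
qed
lemma seg_hd: "a < b \<Longrightarrow> hd (seg n a b) = dd n b"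
  by (simp add: seg_def hd_map hd_rev)

lemma reduced_SS: "reduced (SS n t)"
proof (induction t)
  case 0 then show ?case by simp
next
  case (Suc t)
  then show ?case
  proof (cases t)
    case 0 then show ?thesis by (simp add: SS_Suc)
  next
    case (Suc t')
    have "fst (dd n t) \<noteq> fst (dd n (Suc t))" using Suc by (intro dd_gen_ne) simp
    then have "dd n t \<noteq> inv_letter (dd n (Suc t))" by (auto simp: inv_letter_def)
    then show ?thesis using Suc.IH \<open>t = Suc t'\<close> by (simp add: SS_Suc)
  qed
qed

lemma reduced_seg: "a \<le> b \<Longrightarrow> reduced (seg n a b)"
  using reduced_SS[of n b] SS_split[of a b n] by (simp add: reduced_append)

lemma nth_SS: "k < s \<Longrightarrow> SS n s ! (s - Suc k) = dd n (Suc k)"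
  unfolding SS_def
proof (subst nth_map)
  assume "k < s"
  then show "s - Suc k < length (rev [1..<Suc s])" by simp
  have "rev [1..<Suc s] ! (s - Suc k) = [1..<Suc s] ! (length [1..<Suc s] - Suc (s - Suc k))"
    using \<open>k < s\<close> by (intro rev_nth) simp
  also have "\<dots> = Suc k" using \<open>k < s\<close> by (simp del: upt_Suc)
  finally have "rev [1..<Suc s] ! (s - Suc k) = Suc k" .
  then show "dd n (rev [1..<Suc s] ! (s - Suc k)) = dd n (Suc k)" by simp
qed
lemma nth_SS_suffix: "lam = u @ SS n s \<Longrightarrow> k < s \<Longrightarrow> lam ! (length lam - Suc k) = dd n (Suc k)"
proof -
  assume "lam = u @ SS n s" "k < s"
  then have "length lam - Suc k = length u + (s - Suc k)" by simp
  then show ?thesis using \<open>lam = u @ SS n s\<close> \<open>k < s\<close> by (simp only: nth_append_length_plus nth_SS)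
qed

lemma mseq_SS: "i \<le> n \<Longrightarrow> mseq i = SS n i"
  unfolding SS_def mseq_def by (auto simp: rev_map dd_M intro!: map_cong)

lemma Pw_SS: "Pw n (Suc q) = SS n (n + 4*q)"
proof (induction q)
  case 0 then show ?case by (simp add: Pw_def mseq_SS)
next
  case (Suc q)
  have "Pw n (Suc (Suc q)) = hword (Suc q) @ Pw n (Suc q)" by (simp add: Pw_def)
  also have "\<dots> = hword (Suc q) @ SS n (n + 4*q)" using Suc by simp
  also have "\<dots> = SS n (n + 4 * Suc q)"
  proof -
    have e: "n + 4 * Suc q = Suc (Suc (Suc (Suc (n + 4*q))))" by simp
    have "dd n (Suc (n + 4*q)) = (Ag (Suc q), True)" using dd_1[of n q] by simp
    moreover have "dd n (Suc (Suc (n + 4*q))) = (Bg (Suc q), False)" using dd_2[of n q] by (simp add: numeral_eq_Suc)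
    moreover have "dd n (Suc (Suc (Suc (n + 4*q)))) = (Ag (Suc q), False)" using dd_3[of n q] by (simp add: numeral_eq_Suc)
    moreover have "dd n (Suc (Suc (Suc (Suc (n + 4*q))))) = (Bg (Suc q), True)" using dd_4[of n q] by (simp add: numeral_eq_Suc)
    ultimately show ?thesis unfolding e by (simp add: SS_Suc hword_def)
  qed
  finally show ?case .
qed

lemma P'w_SS: "P'w n q = SS n (n + 4*q)"
  using Pw_SS[of n q] by (simp add: Pw_def P'w_def)

lemma SS_p_hd: "1 \<le> n + 4*q \<Longrightarrow> SS n (n + 4*q) \<noteq> [] \<and> (fst (hd (SS n (n + 4*q))) = Mg n \<and> q = 0 \<or> fst (hd (SS n (n+4*q))) = Bg q \<and> q \<ge> 1)"
proof (cases q)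
  case 0
  assume "1 \<le> n + 4*q"
  then obtain m where "n = Suc m" using 0 by (cases n) auto
  then show ?thesis using 0 by (simp add: SS_Suc dd_M)
next
  case (Suc q')
  have "n + 4*q = Suc (n + 4*q' + 3)" using Suc by simp
  moreover have "dd n (Suc (n + 4*q' + 3)) = (Bg q, True)"
  proof -
    have e: "Suc (n + 4*q' + 3) = n + 4*q' + 4" by simp
    show ?thesis unfolding e by (simp only: dd_4 Suc)
  qed
  ultimately show ?thesis using Suc by (simp only: SS_Suc) simp
qed

definition rk :: "nat \<Rightarrow> letter \<Rightarrow> nat" where
  "rk n l = (case l of (Mg k, b) \<Rightarrow> 2*k - 2 + (if b then 0 else 1)
     | (Ag j, b) \<Rightarrow> 2*n + 4*j - 4 + (if b then 0 else 2)
     | (Bg j, b) \<Rightarrow> 2*n + 4*j - 4 + (if b then 1 else 3))"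

definition psi :: "letter \<Rightarrow> letter" where
  "psi l = (case l of (Bg j, b) \<Rightarrow> (Bg j, \<not> b) | _ \<Rightarrow> l)"
definition psi' :: "letter \<Rightarrow> letter" where
  "psi' l = (case l of (Mg i, b) \<Rightarrow> (Mg i, \<not> b) | (Bg j, b) \<Rightarrow> (Bg j, \<not> b) | _ \<Rightarrow> l)"

definition cond :: "nat \<Rightarrow> nat \<Rightarrow> letter \<Rightarrow> letter \<Rightarrow> bool" where
  "cond n s z x = (rk n z \<noteq> rk n (dd n (Suc s)) \<and> (rk n z < rk n (dd n (Suc s)) \<longrightarrow> x = psi' (dd n s)) \<and>
                   (rk n (dd n (Suc s)) < rk n z \<longrightarrow> x = psi (dd n (Suc s))))"

definition INV :: "nat \<Rightarrow> letter list \<Rightarrow> letter \<Rightarrow> bool" where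
  "INV n lam x = (\<forall>v z s. lam = v @ [z] @ SS n s \<longrightarrow> z \<noteq> dd n (Suc s) \<longrightarrow> cond n s z x)"

lemma claim_up: "INV n lam x \<Longrightarrow> lam = w @ [z] @ SS n t \<Longrightarrow> x \<noteq> psi' (dd n t) \<Longrightarrow>
   rk n (dd n (Suc t)) \<le> rk n z"
proof (cases "z = dd n (Suc t)")
  case False
  assume "INV n lam x" "lam = w @ [z] @ SS n t" "x \<noteq> psi' (dd n t)"
  then have "cond n t z x" using False unfolding INV_def by blast
  then show ?thesis using \<open>x \<noteq> psi' (dd n t)\<close> unfolding cond_def by auto
qed simp

lemma claim_low: "INV n lam x \<Longrightarrow> lam = w @ [z] @ SS n t \<Longrightarrow> x \<noteq> psi (dd n (Suc t)) \<Longrightarrow>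
   rk n z \<le> rk n (dd n (Suc t))"
proof (cases "z = dd n (Suc t)")
  case False
  assume "INV n lam x" "lam = w @ [z] @ SS n t" "x \<noteq> psi (dd n (Suc t))"
  then have "cond n t z x" using False unfolding INV_def by blast
  then show ?thesis using \<open>x \<noteq> psi (dd n (Suc t))\<close> unfolding cond_def by auto
qed simp

lemma INV_intro:
  assumes lam: "lam = v' @ SS n s'"
    and good: "v' \<noteq> [] \<longrightarrow> cond n s' (last v') x"
  shows "INV n lam x"
  unfolding INV_def
proof (intro allI impI)
  fix v z s
  assume d: "lam = v @ [z] @ SS n s" and z: "z \<noteq> dd n (Suc s)"
  have l1: "length lam = length v + 1 + s" using d by simp
  have l2: "length lam = length v' + s'" using lam by simp
  have len: "length v + 1 + s = length v' + s'" using l1 l2 by simp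
  show "cond n s z x"
  proof (cases "s < s'")
    case True
    have "lam ! (length lam - Suc s) = dd n (Suc s)" using nth_SS_suffix[OF lam True] .
    moreover have "lam ! (length lam - Suc s) = z" using d by (simp add: nth_append)
    ultimately show ?thesis using z by simp
  next
    case False
    show ?thesis
    proof (cases "s' < s")
      case True
      have "lam ! (length lam - Suc s') = dd n (Suc s')" using nth_SS_suffix[OF _ True, of lam "v @ [z]"] d by simp
      moreover have "v' \<noteq> []" using len True by auto
      moreover have "lam ! (length lam - Suc s') = last v'" using lam \<open>v' \<noteq> []\<close>
        by (simp add: nth_append last_conv_nth)
      ultimately show ?thesis using good unfolding cond_def by simp
    next
      case False
      then have "s = s'" using \<open>\<not> s < s'\<close> by simp
      then have "v @ [z] = v'" using d lam by simp
      then show ?thesis using good \<open>s = s'\<close> by auto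
    qed
  qed
qed

lemma max_decomp: "\<exists>v s. lam = v @ SS n s \<and> (v \<noteq> [] \<longrightarrow> last v \<noteq> dd n (Suc s))"
proof -
  define A where "A = {s. \<exists>v. lam = v @ SS n s}"
  have fin: "finite A"
  proof (rule finite_subset)
    show "A \<subseteq> {..length lam}" unfolding A_def by auto
  qed simp
  have "0 \<in> A" unfolding A_def by simp
  define s where "s = Max A"
  have "s \<in> A" unfolding s_def using fin \<open>0 \<in> A\<close> by (intro Max_in) auto
  then obtain v where v: "lam = v @ SS n s" unfolding A_def by auto
  have "last v \<noteq> dd n (Suc s)" if "v \<noteq> []"
  proof
    assume l: "last v = dd n (Suc s)"
    have "butlast v @ SS n (Suc s) = (butlast v @ [last v]) @ SS n s" using l by (simp add: SS_Suc)
    also have "\<dots> = lam" using that v by simp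
    finally have "lam = butlast v @ SS n (Suc s)" by simp
    then have "Suc s \<in> A" unfolding A_def by auto
    then have "Suc s \<le> s" unfolding s_def using fin by simp
    then show False by simp
  qed
  then show ?thesis using v by blast
qed

lemma SS_b1: "SS n (n+4*q+1) = (Ag (Suc q), True) # SS n (n+4*q)"
  using SS_Suc[of n "n+4*q"] dd_1[of n q] by simp
lemma SS_b2: "SS n (n+4*q+2) = (Bg (Suc q), False) # SS n (n+4*q+1)"
  using SS_Suc[of n "n+4*q+1"] dd_2[of n q] by simp
lemma SS_b3: "SS n (n+4*q+3) = (Ag (Suc q), False) # SS n (n+4*q+2)"
  using SS_Suc[of n "n+4*q+2"] dd_3[of n q] by (simp add: numeral_eq_Suc)
lemma SS_b4: "SS n (n+4*q+4) = (Bg (Suc q), True) # SS n (n+4*q+3)"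
  using SS_Suc[of n "n+4*q+3"] dd_4[of n q] by (simp add: numeral_eq_Suc)

lemma SS_b1s: "SS n (Suc (n+4*q)) = (Ag (Suc q), True) # SS n (n+4*q)"
  using SS_b1 by simp
lemma dd_S2: "dd n (Suc (Suc (n+4*q))) = (Bg (Suc q), False)" using dd_2[of n q] by (simp add: numeral_eq_Suc)
lemma dd_S3: "dd n (Suc (Suc (Suc (n+4*q)))) = (Ag (Suc q), False)" using dd_3[of n q] by (simp add: numeral_eq_Suc)
lemma dd_S4: "dd n (Suc (Suc (Suc (Suc (n+4*q))))) = (Bg (Suc q), True)" using dd_4[of n q] by (simp add: numeral_eq_Suc)
lemma dd_S5: "dd n (Suc (Suc (Suc (Suc (Suc (n+4*q)))))) = (Ag (Suc (Suc q)), True)"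
proof -
  have e: "Suc (Suc (Suc (Suc (Suc (n+4*q))))) = n + 4 * Suc q + 1" by simp
  show ?thesis unfolding e by (rule dd_1)
qed
lemma dd_Suc1: "dd n (Suc (n+4*q)) = (Ag (Suc q), True)" using dd_1[of n q] by simp
lemma dd_Suc2: "dd n (Suc (n+4*q+1)) = (Bg (Suc q), False)" using dd_2[of n q] by simp
lemma dd_Suc3: "dd n (Suc (n+4*q+2)) = (Ag (Suc q), False)" using dd_3[of n q] by (simp add: numeral_eq_Suc)
lemma dd_Suc4: "dd n (Suc (n+4*q+3)) = (Bg (Suc q), True)" using dd_4[of n q] by (simp add: numeral_eq_Suc)
lemma dd_Suc5: "dd n (Suc (n+4*q+4)) = (Ag (Suc (Suc q)), True)" using dd_1[of n "Suc q"] by simp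

lemmas ddS = dd_S2 dd_S3 dd_S4 dd_S5 dd_Suc1 dd_Suc2 dd_Suc3 dd_Suc4 dd_Suc5 dd_1 dd_2 dd_3 dd_4

lemma dd_Suc_M: "1 \<le> i \<Longrightarrow> i \<le> n \<Longrightarrow> rk n (dd n (Suc i)) = 2*i"
proof (cases "Suc i \<le> n")
  case True then show ?thesis by (simp add: dd_M rk_def)
next
  case False
  assume "i \<le> n"
  then have "Suc i = n + 4*0 + 1" using False by simp
  then have "dd n (Suc i) = (Ag 1, True)" by (simp only: dd_1) simp
  then show ?thesis using \<open>i \<le> n\<close> False by (simp add: rk_def)
qed

lemma reduced_mid: "reduced (w @ [z] @ l # r) \<Longrightarrow> z \<noteq> inv_letter l"
  by (auto simp: reduced_append)

lemma final_claims:
  fixes n g :: nat and lam w w' :: "letter list" and z x :: letter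
  assumes inv: "INV n lam x" and red: "reduced lam" and form: "lam = w @ [z] @ w'"
    and zv: "valid_gen n g (fst z)"
  shows
   "(\<forall>i. 1 \<le> i \<and> i \<le> n \<and> w' = mseq i \<and> x \<noteq> (Mg i, False)
        \<longrightarrow> z \<in> pm (Ms (Suc i) n \<union> ABs 1 g))
  \<and> (\<forall>i. 1 \<le> i \<and> i \<le> n \<and> w' = mseq (i - 1) \<and> x \<noteq> (Mg i, True)
        \<longrightarrow> z \<in> pm (Ms 1 (i - 1)) \<union> {(Mg i, True)})
  \<and> (\<forall>j. 1 \<le> j \<and> j \<le> g \<and> w' = Pw n j \<and> x \<noteq> (Ag j, True)
        \<longrightarrow> z \<in> pm (Ms 1 n \<union> ABs 1 (j - 1)) \<union> {(Ag j, True)})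
  \<and> (\<forall>j. 1 \<le> j \<and> j \<le> g \<and> w' = (Ag j, True) # Pw n j \<and> x \<noteq> (Ag j, True)
        \<longrightarrow> z \<in> {(Bg j, False)} \<union> pm (ABs (Suc j) g))
  \<and> (\<forall>j. 1 \<le> j \<and> j \<le> g \<and> w' = [(Ag j, False), (Bg j, False), (Ag j, True)] @ Pw n j
          \<and> x \<noteq> (Ag j, False)
        \<longrightarrow> z \<in> {(Ag j, False)} \<union> pm ({Bg j} \<union> ABs (Suc j) g))
  \<and> (\<forall>j. 1 \<le> j \<and> j \<le> g \<and> w' = [(Bg j, False), (Ag j, True)] @ Pw n j
          \<and> x \<noteq> (Ag j, False)
        \<longrightarrow> z \<in> pm (Ms 1 n \<union> ABs 1 (j - 1) \<union> {Ag j}))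
  \<and> (\<forall>j. 1 \<le> j \<and> j \<le> g \<and> w' = [(Bg j, False), (Ag j, True)] @ Pw n j
          \<and> x \<noteq> (Bg j, True)
        \<longrightarrow> z \<in> {(Ag j, False), (Bg j, False)} \<union> pm (ABs (Suc j) g))
  \<and> (\<forall>j. 1 \<le> j \<and> j \<le> g \<and> w' = (Ag j, True) # Pw n j \<and> x \<noteq> (Bg j, True)
        \<longrightarrow> z \<in> pm (Ms 1 n \<union> ABs 1 (j - 1)) \<union> {(Ag j, True)} \<union> pm {Bg j})
  \<and> (\<forall>j. 1 \<le> j \<and> j \<le> g \<and> w' = [(Ag j, False), (Bg j, False), (Ag j, True)] @ Pw n j
          \<and> x \<noteq> (Bg j, False)
        \<longrightarrow> z \<in> pm (Ms 1 n \<union> ABs 1 (j - 1)) \<union> {(Bg j, True)})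
  \<and> (\<forall>j. 1 \<le> j \<and> j \<le> g \<and> w' = P'w n j \<and> x \<noteq> (Bg j, False)
        \<longrightarrow> z \<in> pm (ABs (Suc j) g))"
proof (intro conjI allI impI; (elim conjE)?)
  obtain zg zb where z: "z = (zg, zb)" by (cases z)
  note ms = pm_def Ms_def ABs_def rk_def valid_gen_def
  {
    fix i assume i: "1 \<le> i" "i \<le> n" "w' = mseq i" "x \<noteq> (Mg i, False)"
    have l: "lam = w @ [z] @ SS n i" using form i by (simp add: mseq_SS)
    have "x \<noteq> psi' (dd n i)" using i by (simp add: dd_M psi'_def)
    from claim_up[OF inv l this] have "2*i \<le> rk n z" using dd_Suc_M i by simp
    then show "z \<in> pm (Ms (Suc i) n \<union> ABs 1 g)" using zv i unfolding z
      by (cases zg) (auto simp: ms split: if_splits)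
  next
    fix i assume i: "1 \<le> i" "i \<le> n" "w' = mseq (i - 1)" "x \<noteq> (Mg i, True)"
    have l: "lam = w @ [z] @ SS n (i - 1)" using form i by (simp add: mseq_SS)
    have e: "Suc (i - 1) = i" using i by simp
    have "x \<noteq> psi (dd n (Suc (i - 1)))" using i unfolding e by (simp add: dd_M psi_def)
    from claim_low[OF inv l this] have "rk n z \<le> 2*i - 2" using i unfolding e by (simp add: dd_M rk_def)
    then show "z \<in> pm (Ms 1 (i - 1)) \<union> {(Mg i, True)}" using zv i unfolding z
      by (cases zg) (auto simp: ms split: if_splits)
  }
  {
    fix j assume j: "1 \<le> j" "j \<le> g"
    then obtain q where q: "j = Suc q" by (cases j) auto
    have P: "Pw n j = SS n (n + 4*q)" using q Pw_SS by simp
    {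
      assume a: "w' = Pw n j" "x \<noteq> (Ag j, True)"
      have l: "lam = w @ [z] @ SS n (n+4*q)" using form a P by simp
      have "x \<noteq> psi (dd n (Suc (n+4*q)))" using a q by (simp only: dd_Suc1) (simp add: psi_def)
      from claim_low[OF inv l this] have "rk n z \<le> 2*n + 4*j - 4" using q by (simp only: dd_Suc1) (simp add: rk_def)
      then show "z \<in> pm (Ms 1 n \<union> ABs 1 (j - 1)) \<union> {(Ag j, True)}" using zv j unfolding z
        by (cases zg) (auto simp: ms split: if_splits)
    }
    {
      assume a: "w' = (Ag j, True) # Pw n j" "x \<noteq> (Ag j, True)"
      have l: "lam = w @ [z] @ SS n (n+4*q+1)" using form a P q by (simp add: SS_Suc ddS SS_b3 SS_b4)
      have "x \<noteq> psi' (dd n (n+4*q+1))" using a q by (simp only: dd_1) (simp add: psi'_def)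
      from claim_up[OF inv l this] have "2*n + 4*j - 1 \<le> rk n z" using q by (simp only: dd_Suc2) (simp add: rk_def)
      then show "z \<in> {(Bg j, False)} \<union> pm (ABs (Suc j) g)" using zv j unfolding z
        by (cases zg) (auto simp: ms split: if_splits)
    }
    {
      assume a: "w' = [(Ag j, False), (Bg j, False), (Ag j, True)] @ Pw n j" "x \<noteq> (Ag j, False)"
      have l: "lam = w @ [z] @ SS n (n+4*q+3)" using form a P q by (simp add: SS_Suc ddS SS_b3 SS_b4)
      have "x \<noteq> psi' (dd n (n+4*q+3))" using a q by (simp only: dd_3) (simp add: psi'_def)
      from claim_up[OF inv l this] have "2*n + 4*j - 3 \<le> rk n z" using q by (simp only: dd_Suc4) (simp add: rk_def)
      then show "z \<in> {(Ag j, False)} \<union> pm ({Bg j} \<union> ABs (Suc j) g)" using zv j unfolding z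
        by (cases zg) (auto simp: ms split: if_splits)
    }
    {
      assume a: "w' = [(Bg j, False), (Ag j, True)] @ Pw n j" "x \<noteq> (Ag j, False)"
      have l: "lam = w @ [z] @ SS n (n+4*q+2)" using form a P q by (simp add: SS_Suc ddS SS_b3 SS_b4)
      have "x \<noteq> psi (dd n (Suc (n+4*q+2)))" using a q by (simp only: dd_Suc3) (simp add: psi_def)
      from claim_low[OF inv l this] have "rk n z \<le> 2*n + 4*j - 2" using q by (simp only: dd_Suc3) (simp add: rk_def)
      moreover have "z \<noteq> (Bg j, True)" using reduced_mid[of w z "(Bg j, False)"] red form a
        by (simp add: inv_letter_def)
      ultimately show "z \<in> pm (Ms 1 n \<union> ABs 1 (j - 1) \<union> {Ag j})" using zv j unfolding z
        by (cases zg) (auto simp: ms split: if_splits)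
    }
    {
      assume a: "w' = [(Bg j, False), (Ag j, True)] @ Pw n j" "x \<noteq> (Bg j, True)"
      have l: "lam = w @ [z] @ SS n (n+4*q+2)" using form a P q by (simp add: SS_Suc ddS SS_b3 SS_b4)
      have "x \<noteq> psi' (dd n (n+4*q+2))" using a q by (simp only: dd_2) (simp add: psi'_def)
      from claim_up[OF inv l this] have "2*n + 4*j - 2 \<le> rk n z" using q by (simp only: dd_Suc3) (simp add: rk_def)
      then show "z \<in> {(Ag j, False), (Bg j, False)} \<union> pm (ABs (Suc j) g)" using zv j unfolding z
        by (cases zg) (auto simp: ms split: if_splits)
    }
    {
      assume a: "w' = (Ag j, True) # Pw n j" "x \<noteq> (Bg j, True)"
      have l: "lam = w @ [z] @ SS n (n+4*q+1)" using form a P q by (simp add: SS_Suc ddS SS_b3 SS_b4)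
      have "x \<noteq> psi (dd n (Suc (n+4*q+1)))" using a q by (simp only: dd_Suc2) (simp add: psi_def)
      from claim_low[OF inv l this] have "rk n z \<le> 2*n + 4*j - 1" using q by (simp only: dd_Suc2) (simp add: rk_def)
      moreover have "z \<noteq> (Ag j, False)" using reduced_mid[of w z "(Ag j, True)"] red form a
        by (simp add: inv_letter_def)
      ultimately show "z \<in> pm (Ms 1 n \<union> ABs 1 (j - 1)) \<union> {(Ag j, True)} \<union> pm {Bg j}" using zv j unfolding z
        by (cases zg) (auto simp: ms split: if_splits)
    }
    {
      assume a: "w' = [(Ag j, False), (Bg j, False), (Ag j, True)] @ Pw n j" "x \<noteq> (Bg j, False)"
      have l: "lam = w @ [z] @ SS n (n+4*q+3)" using form a P q by (simp add: SS_Suc ddS SS_b3 SS_b4)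
      have "x \<noteq> psi (dd n (Suc (n+4*q+3)))" using a q by (simp only: dd_Suc4) (simp add: psi_def)
      from claim_low[OF inv l this] have "rk n z \<le> 2*n + 4*j - 3" using q by (simp only: dd_Suc4) (simp add: rk_def)
      moreover have "z \<noteq> (Ag j, True)" using reduced_mid[of w z "(Ag j, False)"] red form a
        by (simp add: inv_letter_def)
      ultimately show "z \<in> pm (Ms 1 n \<union> ABs 1 (j - 1)) \<union> {(Bg j, True)}" using zv j unfolding z
        by (cases zg) (auto simp: ms split: if_splits)
    }
    {
      assume a: "w' = P'w n j" "x \<noteq> (Bg j, False)"
      have l: "lam = w @ [z] @ SS n (n+4*q+4)" using form a q P'w_SS[of n j] by (simp add: algebra_simps)
      have "x \<noteq> psi' (dd n (n+4*q+4))" using a q by (simp only: dd_4) (simp add: psi'_def)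
      from claim_up[OF inv l this] have "2*n + 4*j \<le> rk n z" using q by (simp only: dd_Suc5) (simp add: rk_def)
      then show "z \<in> pm (ABs (Suc j) g)" using zv j unfolding z
        by (cases zg) (auto simp: ms split: if_splits)
    }
  }
qed

lemma reduced_prefix: "reduced (a @ b) \<Longrightarrow> reduced a"
  by (simp add: reduced_append)
lemma reduced_suffix: "reduced (a @ b) \<Longrightarrow> reduced b"
  by (simp add: reduced_append)

lemma G1: "s \<le> t \<Longrightarrow> reduce (v @ SS n s @ inv_word (SS n t) @ Y) = reduce (v @ inv_word (seg n s t) @ Y)"
proof -
  assume "s \<le> t"
  then have "v @ SS n s @ inv_word (SS n t) @ Y = v @ SS n s @ inv_word (SS n s) @ (inv_word (seg n s t) @ Y)"
    by (simp add: SS_split[of s t n])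
  then show ?thesis by (simp only: R2)
qed

lemma G2: "t \<le> s \<Longrightarrow> reduce (v @ SS n s @ inv_word (SS n t) @ Y) = reduce (v @ seg n t s @ Y)"
proof -
  assume "t \<le> s"
  then have "v @ SS n s @ inv_word (SS n t) @ Y = (v @ seg n t s) @ SS n t @ inv_word (SS n t) @ Y"
    by (simp add: SS_split[of t s n])
  then show ?thesis by (simp only: R2) simp
qed

lemma G_red:
  assumes red: "reduced (v @ SS n s)" and st: "s \<le> t"
    and lv: "v \<noteq> [] \<longrightarrow> last v \<noteq> dd n (Suc s)"
    and rY: "reduced Y" and Yne: "Y \<noteq> []"
    and hY: "fst (hd Y) = fst (dd n (Suc t))"
    and hY2: "s = t \<longrightarrow> hd Y = inv_letter (dd n (Suc t))"
  shows "reduced (v @ inv_word (seg n s t) @ Y)"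
proof (cases "s = t")
  case True
  have "reduced v" using red by (simp add: reduced_append)
  moreover have "hd Y \<noteq> inv_letter (last v)" if "v \<noteq> []" using hY2 True lv that by (metis inv_inv)
  ultimately show ?thesis using True rY Yne by (auto simp: reduced_append)
next
  case False
  then have lt: "s < t" using st by simp
  have rv: "reduced v" using red by (simp add: reduced_append)
  have rs: "reduced (inv_word (seg n s t))" using st by (intro reduced_inv_word reduced_seg)
  have sl: "seg n s t \<noteq> []" "last (seg n s t) = dd n (Suc s)" using seg_last[OF lt] by auto
  have sh: "hd (seg n s t) = dd n t" using seg_hd[OF lt] .
  have ne: "fst (dd n t) \<noteq> fst (dd n (Suc t))" using lt by (intro dd_gen_ne) simp
  have i1: "hd (inv_word (seg n s t)) = inv_letter (dd n (Suc s))" using sl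
    by (simp add: inv_word_def hd_map hd_rev last_map)
  have i2: "last (inv_word (seg n s t)) = inv_letter (dd n t)" using sl sh
    by (simp add: inv_word_def last_map last_rev hd_map)
  have "reduced (inv_word (seg n s t) @ Y)"
    using rs rY Yne sl i2 hY ne by (auto simp: reduced_append inv_word_def inv_letter_def)
  moreover have "inv_word (seg n s t) \<noteq> []" using sl by (simp add: inv_word_def)
  moreover have "hd (inv_word (seg n s t) @ Y) \<noteq> inv_letter (last v)" if "v \<noteq> []"
  proof -
    have "hd (inv_word (seg n s t) @ Y) = inv_letter (dd n (Suc s))" using i1 \<open>inv_word (seg n s t) \<noteq> []\<close> by simp
    then show ?thesis using lv that by (metis inv_inv)
  qed
  ultimately show ?thesis using rv by (auto simp: reduced_append)
qed

lemma hword_eq: "hword j = [(Bg j, True), (Ag j, False), (Bg j, False), (Ag j, True)]"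
  by (simp add: hword_def)

lemma P'w_Pw: "P'w n (Suc q) = hword (Suc q) @ Pw n (Suc q)"
  by (simp add: P'w_def Pw_def)

lemma dexp_MP: "1 \<le> i \<Longrightarrow> i \<le> n \<Longrightarrow>
  dual_exp n (Mg i, True) = inv_word (SS n (i - 1)) @ [(Mg i, False)] @ SS n (i - 1)"
proof -
  assume "1 \<le> i" "i \<le> n"
  then have "mseq (i - 1) = SS n (i - 1)" by (intro mseq_SS) simp
  then show ?thesis by (simp add: dual_exp_def)
qed

lemma dexp_MN: "1 \<le> i \<Longrightarrow> i \<le> n \<Longrightarrow>
  dual_exp n (Mg i, False) = inv_word (SS n (i - 1)) @ [(Mg i, True)] @ SS n (i - 1)"
proof -
  assume "1 \<le> i" "i \<le> n"
  then have "mseq (i - 1) = SS n (i - 1)" by (intro mseq_SS) simp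
  then show ?thesis by (simp add: dual_exp_def inv_letter_def)
qed

lemma dexp_AP: "reduce (L @ dual_exp n (Ag (Suc q), True)) =
  reduce (L @ inv_word (SS n (n+4*q)) @ [(Ag (Suc q), False), (Bg (Suc q), True), (Ag (Suc q), True)] @ SS n (n+4*q))"
proof -
  have "L @ dual_exp n (Ag (Suc q), True) = (L @ inv_word (SS n (n+4*q)) @ [(Ag (Suc q), False), (Bg (Suc q), True), (Ag (Suc q), True)])
     @ [(Bg (Suc q), False)] @ inv_word [(Bg (Suc q), False)] @ SS n (n+4*q)"
    by (simp add: dual_exp_def P'w_Pw Pw_SS hword_eq inv_letter_def)
  then show ?thesis by (simp only: R2) simp
qed

lemma dexp_AN: "reduce (L @ dual_exp n (Ag (Suc q), False)) =
  reduce (L @ inv_word (SS n (n+4*q)) @ [(Ag (Suc q), False), (Bg (Suc q), False), (Ag (Suc q), True)] @ SS n (n+4*q))"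
proof -
  have "L @ dual_exp n (Ag (Suc q), False) = (L @ inv_word (SS n (n+4*q)))
     @ [(Bg (Suc q), False)] @ inv_word [(Bg (Suc q), False)] @ [(Ag (Suc q), False), (Bg (Suc q), False), (Ag (Suc q), True)] @ SS n (n+4*q)"
    by (simp add: dual_exp_def P'w_Pw Pw_SS hword_eq inv_letter_def)
  then show ?thesis by (simp only: R2) simp
qed

lemma dexp_BP: "dual_exp n (Bg (Suc q), True) =
  inv_word (SS n (n+4*q)) @ [(Ag (Suc q), False), (Bg (Suc q), True), (Ag (Suc q), True), (Bg (Suc q), False), (Ag (Suc q), True)] @ SS n (n+4*q)"
  by (simp add: dual_exp_def P'w_Pw Pw_SS hword_eq inv_letter_def)

lemma dexp_BN: "dual_exp n (Bg (Suc q), False) =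
  inv_word (SS n (n+4*q)) @ [(Ag (Suc q), False), (Bg (Suc q), True), (Ag (Suc q), False), (Bg (Suc q), False), (Ag (Suc q), True)] @ SS n (n+4*q)"
  by (simp add: dual_exp_def P'w_Pw Pw_SS hword_eq inv_letter_def)

lemma seg_b: 
  "seg n (n+4*q) (n+4*q+1) = [(Ag (Suc q), True)]"
  "seg n (n+4*q) (n+4*q+2) = [(Bg (Suc q), False), (Ag (Suc q), True)]"
  "seg n (n+4*q) (n+4*q+3) = [(Ag (Suc q), False), (Bg (Suc q), False), (Ag (Suc q), True)]"
  "seg n (n+4*q) (n+4*q+4) = [(Bg (Suc q), True), (Ag (Suc q), False), (Bg (Suc q), False), (Ag (Suc q), True)]"
  "seg n (n+4*q) (n+4*q+5) = [(Ag (Suc (Suc q)), True), (Bg (Suc q), True), (Ag (Suc q), False), (Bg (Suc q), False), (Ag (Suc q), True)]"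
proof -
  have e1: "n+4*q+1 = Suc (n+4*q)" and e2: "n+4*q+2 = Suc (Suc (n+4*q))"
    and e3: "n+4*q+3 = Suc (Suc (Suc (n+4*q)))" and e4: "n+4*q+4 = Suc (Suc (Suc (Suc (n+4*q))))"
    and e5: "n+4*q+5 = Suc (Suc (Suc (Suc (Suc (n+4*q)))))" by simp_all
  show "seg n (n+4*q) (n+4*q+1) = [(Ag (Suc q), True)]"
    unfolding e1 by (simp add: seg_Suc dd_Suc1)
  show "seg n (n+4*q) (n+4*q+2) = [(Bg (Suc q), False), (Ag (Suc q), True)]"
    unfolding e2 by (simp add: seg_Suc dd_Suc1 dd_S2)
  show "seg n (n+4*q) (n+4*q+3) = [(Ag (Suc q), False), (Bg (Suc q), False), (Ag (Suc q), True)]"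
    unfolding e3 by (simp add: seg_Suc dd_Suc1 dd_S2 dd_S3)
  show "seg n (n+4*q) (n+4*q+4) = [(Bg (Suc q), True), (Ag (Suc q), False), (Bg (Suc q), False), (Ag (Suc q), True)]"
    unfolding e4 by (simp add: seg_Suc dd_Suc1 dd_S2 dd_S3 dd_S4)
  show "seg n (n+4*q) (n+4*q+5) = [(Ag (Suc (Suc q)), True), (Bg (Suc q), True), (Ag (Suc q), False), (Bg (Suc q), False), (Ag (Suc q), True)]"
    unfolding e5 by (simp add: seg_Suc dd_Suc1 dd_S2 dd_S3 dd_S4 dd_S5)
qed

lemma SS_bl:
  "SS n (n+4*q+1) = [(Ag (Suc q), True)] @ SS n (n+4*q)"
  "SS n (n+4*q+2) = [(Bg (Suc q), False), (Ag (Suc q), True)] @ SS n (n+4*q)"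
  "SS n (n+4*q+3) = [(Ag (Suc q), False), (Bg (Suc q), False), (Ag (Suc q), True)] @ SS n (n+4*q)"
  "SS n (n+4*q+4) = [(Bg (Suc q), True), (Ag (Suc q), False), (Bg (Suc q), False), (Ag (Suc q), True)] @ SS n (n+4*q)"
  using SS_split[of "n+4*q" "n+4*q+1" n] SS_split[of "n+4*q" "n+4*q+2" n] 
    SS_split[of "n+4*q" "n+4*q+3" n] SS_split[of "n+4*q" "n+4*q+4" n] seg_b by simp_all

lemma dd_p: "1 \<le> n + 4*q \<Longrightarrow> (dd n (n+4*q) = (Mg n, True) \<and> q = 0 \<and> 1 \<le> n) \<or> (dd n (n+4*q) = (Bg q, True) \<and> 1 \<le> q)"
proof (cases q)
  case 0
  assume "1 \<le> n + 4*q"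
  then show ?thesis using 0 by (simp add: dd_M)
next
  case (Suc q')
  have e: "n + 4*q = n + 4*q' + 4" using Suc by simp
  have "dd n (n + 4*q) = (Bg (Suc q'), True)" unfolding e by (rule dd_4)
  then show ?thesis using Suc by simp
qed

lemma finish: "reduce W = reduce W' \<Longrightarrow> W' = v' @ SS n s' \<Longrightarrow> reduced W' \<Longrightarrow>
   (v' \<noteq> [] \<longrightarrow> cond n s' (last v') x) \<Longrightarrow>
   \<exists>v' s'. reduce W = v' @ SS n s' \<and> (v' \<noteq> [] \<longrightarrow> cond n s' (last v') x)"
  using R1 by metis

lemma R6: "reduce (a @ b @ c) = reduce (a @ reduce b @ c)"
proof -
  have "reduce (a @ b @ c) = foldr red_step a (foldr red_step b (reduce c))" by (simp add: reduce_def)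
  also have "\<dots> = foldr red_step a (foldr red_step (reduce b) (reduce c))"
    by (rule arg_cong[where f="foldr red_step a"], rule foldr_reduce[OF reduce_reduced])
  also have "\<dots> = reduce (a @ reduce b @ c)" by (simp add: reduce_def)
  finally show ?thesis .
qed

lemma reduce_Cons: "reduce (x # xs) = red_step x (reduce xs)" by (simp add: reduce_def)
lemma reduce_Nil: "reduce [] = []" by (simp add: reduce_def)

lemma cond_ne: "cond n s z x \<Longrightarrow> z \<noteq> dd n (Suc s)"
  by (auto simp: cond_def)

lemma red_cons_SS: "t = 0 \<or> dd n t \<noteq> inv_letter c \<Longrightarrow> reduced (c # SS n t)"
proof (cases t)
  case (Suc t')
  assume a: "t = 0 \<or> dd n t \<noteq> inv_letter c"
  have "reduced (SS n (Suc t'))" by (rule reduced_SS)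
  then show ?thesis using a Suc by (simp add: SS_Suc)
qed simp

lemma red_cons_SSp: "fst c = Ag (Suc q) \<or> fst c = Bg (Suc q) \<Longrightarrow> reduced (c # SS n (n+4*q))"
proof (rule red_cons_SS)
  assume a: "fst c = Ag (Suc q) \<or> fst c = Bg (Suc q)"
  show "n + 4*q = 0 \<or> dd n (n+4*q) \<noteq> inv_letter c"
  proof (cases "n + 4*q = 0")
    case False
    then have "1 \<le> n + 4*q" by linarith
    from dd_p[OF this] a show ?thesis by (auto simp: inv_letter_def)
  qed simp
qed

lemma rk_blk:
  "rk n (Ag (Suc q), True) = 2*n+4*q"
  "rk n (Bg (Suc q), True) = 2*n+4*q+1"
  "rk n (Ag (Suc q), False) = 2*n+4*q+2"
  "rk n (Bg (Suc q), False) = 2*n+4*q+3"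
  "rk n (Ag (Suc (Suc q)), True) = 2*n+4*q+4"
  by (simp_all add: rk_def)

lemma cond_p0: "cond n (n+4*q) z x \<longleftrightarrow> rk n z \<noteq> 2*n+4*q \<and> (rk n z < 2*n+4*q \<longrightarrow> x = psi' (dd n (n+4*q))) \<and>
   (2*n+4*q < rk n z \<longrightarrow> x = (Ag (Suc q), True))"
  by (simp add: cond_def dd_Suc1 rk_blk psi_def)
lemma cond_p1: "cond n (n+4*q+1) z x \<longleftrightarrow> rk n z \<noteq> 2*n+4*q+3 \<and> (rk n z < 2*n+4*q+3 \<longrightarrow> x = (Ag (Suc q), True)) \<and>
   (2*n+4*q+3 < rk n z \<longrightarrow> x = (Bg (Suc q), True))"
  unfolding cond_def by (simp only: dd_Suc2 dd_1) (simp only: rk_blk, simp add: psi_def psi'_def ac_simps)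
lemma cond_p2: "cond n (n+4*q+2) z x \<longleftrightarrow> rk n z \<noteq> 2*n+4*q+2 \<and> (rk n z < 2*n+4*q+2 \<longrightarrow> x = (Bg (Suc q), True)) \<and>
   (2*n+4*q+2 < rk n z \<longrightarrow> x = (Ag (Suc q), False))"
  unfolding cond_def by (simp only: dd_Suc3 dd_2) (simp only: rk_blk, simp add: psi_def psi'_def ac_simps)
lemma cond_p3: "cond n (n+4*q+3) z x \<longleftrightarrow> rk n z \<noteq> 2*n+4*q+1 \<and> (rk n z < 2*n+4*q+1 \<longrightarrow> x = (Ag (Suc q), False)) \<and>
   (2*n+4*q+1 < rk n z \<longrightarrow> x = (Bg (Suc q), False))"
  unfolding cond_def by (simp only: dd_Suc4 dd_3) (simp only: rk_blk, simp add: psi_def psi'_def ac_simps)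
lemma cond_p4: "cond n (n+4*q+4) z x \<longleftrightarrow> rk n z \<noteq> 2*n+4*q+4 \<and> (rk n z < 2*n+4*q+4 \<longrightarrow> x = (Bg (Suc q), False)) \<and>
   (2*n+4*q+4 < rk n z \<longrightarrow> x = (Ag (Suc (Suc q)), True))"
  unfolding cond_def by (simp only: dd_Suc5 dd_4) (simp only: rk_blk, simp add: psi_def psi'_def ac_simps)

lemma rk_inv_dd_p: "1 \<le> n + 4*q \<Longrightarrow> rk n (inv_letter (dd n (n+4*q))) < 2*n+4*q"
  using dd_p[of n q] by (auto simp: rk_def inv_letter_def)

lemma red_v_SSp: "reduced v \<Longrightarrow> (v \<noteq> [] \<longrightarrow> 2*n+4*q \<le> rk n (last v)) \<Longrightarrow> reduced (v @ SS n (n+4*q))"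
proof -
  assume rv: "reduced v" and h: "v \<noteq> [] \<longrightarrow> 2*n+4*q \<le> rk n (last v)"
  show ?thesis
  proof (cases "n + 4*q = 0")
    case True then show ?thesis using rv by simp
  next
    case False
    then have p1: "1 \<le> n + 4*q" by linarith
    obtain p' where p': "n + 4*q = Suc p'" using False by (cases "n+4*q") auto
    have hd: "hd (SS n (n+4*q)) = dd n (n+4*q)" unfolding p' by (simp add: SS_Suc)
    have "hd (SS n (n+4*q)) \<noteq> inv_letter (last v)" if "v \<noteq> []"
    proof
      assume "hd (SS n (n+4*q)) = inv_letter (last v)"
      then have "last v = inv_letter (dd n (n+4*q))" using hd by (metis inv_inv)
      then show False using rk_inv_dd_p[OF p1] h that by simp
    qed
    then show ?thesis using rv reduced_SS[of n "n+4*q"] by (simp add: reduced_append)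
  qed
qed

lemma red_app_cons: "reduced v \<Longrightarrow> reduced (c # r) \<Longrightarrow> (v \<noteq> [] \<longrightarrow> last v \<noteq> inv_letter c) \<Longrightarrow> reduced (v @ c # r)"
  by (auto simp: reduced_append)

lemmas SSX = SS_bl SS_b1s SS_Suc dd_Suc1 dd_S2 dd_S3 dd_S4 dd_S5

lemma finish2: "reduce W = reduce (v' @ SS n s') \<Longrightarrow> reduced (v' @ SS n s') \<Longrightarrow>
   (v' \<noteq> [] \<longrightarrow> cond n s' (last v') x) \<Longrightarrow>
   \<exists>v' s'. reduce W = v' @ SS n s' \<and> (v' \<noteq> [] \<longrightarrow> cond n s' (last v') x)"
  using R1 by metis

lemma step_AP:
  assumes red: "reduced (v @ SS n s)"
    and old: "v \<noteq> [] \<longrightarrow> cond n s (last v) xo"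
    and xne: "(Ag (Suc q), True) \<noteq> inv_letter xo"
  shows "\<exists>v' s'. reduce (v @ SS n s @ dual_exp n (Ag (Suc q), True)) = v' @ SS n s' \<and>
           (v' \<noteq> [] \<longrightarrow> cond n s' (last v') (Ag (Suc q), True))"
proof -
  let ?A = "(Ag (Suc q), True)" and ?Ai = "(Ag (Suc q), False)"
  let ?B = "(Bg (Suc q), True)" and ?Bi = "(Bg (Suc q), False)"
  let ?p = "n + 4*q"
  have xo: "xo \<noteq> ?Ai" using xne by (auto simp: inv_letter_def)
  have r0: "reduce (v @ SS n s @ dual_exp n ?A) = reduce (v @ SS n s @ inv_word (SS n ?p) @ [?Ai, ?B, ?A] @ SS n ?p)"
    using dexp_AP[of "v @ SS n s" n q] by simp
  have lv: "v \<noteq> [] \<longrightarrow> last v \<noteq> dd n (Suc s)" using old cond_ne by blast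
  have rv: "reduced v" using red by (rule reduced_prefix)
  consider (le) "s \<le> ?p" | (e1) "s = ?p+1" | (e2) "s = ?p+2" | (e3) "s = ?p+3" | (ge) "?p+4 \<le> s" by linarith
  then show ?thesis
  proof cases
    case le
    have f1: "reduce (v @ SS n s @ dual_exp n ?A) = reduce (v @ inv_word (seg n s ?p) @ [?Ai, ?B, ?A] @ SS n ?p)"
      using r0 G1[OF le] by simp
    have f2: "v @ inv_word (seg n s ?p) @ [?Ai, ?B, ?A] @ SS n ?p = (v @ inv_word (seg n s ?p) @ [?Ai, ?B]) @ SS n (?p+1)"
      by (simp add: SSX)
    have f3: "reduced (v @ inv_word (seg n s ?p) @ [?Ai, ?B, ?A] @ SS n ?p)"
    proof (rule G_red[OF red le lv])
      show "reduced ([?Ai, ?B, ?A] @ SS n ?p)" using red_cons_SSp[of ?A q n] by (simp add: inv_letter_def)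
    qed (simp_all add: dd_Suc1 inv_letter_def)
    have f4: "cond n (?p+1) (last (v @ inv_word (seg n s ?p) @ [?Ai, ?B])) ?A"
      by (simp only: cond_p1) (simp add: rk_blk)
    show ?thesis by (rule finish[OF f1 f2 f3]) (use f4 in simp)
  next
    case e1
    have s: "SS n s = [?A] @ SS n ?p" using e1 by (simp add: SSX)
    have f1: "reduce (v @ SS n s @ dual_exp n ?A) = reduce (v @ reduce ([?A] @ [?Ai, ?B, ?A]) @ SS n ?p)"
      using r0 G2[of ?p s v n] e1 seg_b R6[of v "[?A] @ [?Ai, ?B, ?A]" "SS n ?p"] by simp
    have c: "reduce ([?A] @ [?Ai, ?B, ?A]) = [?B, ?A]" by (simp add: reduce_Cons reduce_Nil inv_letter_def)
    have f2: "v @ [?B, ?A] @ SS n ?p = (v @ [?B]) @ SS n (?p+1)" by (simp add: SSX)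
    have f3: "reduced (v @ [?B, ?A] @ SS n ?p)"
    proof -
      have "v \<noteq> [] \<longrightarrow> last v \<noteq> ?Bi" using lv e1 by (simp only: dd_Suc2)
      moreover have "reduced (?B # ?A # SS n ?p)" using red_cons_SSp[of ?A q n] by (simp add: inv_letter_def)
      ultimately show ?thesis using rv red_app_cons[of v ?B "?A # SS n ?p"] by (simp add: inv_letter_def)
    qed
    have f4: "cond n (?p+1) (last (v @ [?B])) ?A"
      by (simp only: cond_p1) (simp add: rk_blk)
    show ?thesis by (rule finish[OF f1[unfolded c] f2 f3]) (use f4 in simp)
  next
    case e2
    have f1: "reduce (v @ SS n s @ dual_exp n ?A) = reduce (v @ reduce ([?Bi, ?A] @ [?Ai, ?B, ?A]) @ SS n ?p)"
      using r0 G2[of ?p s v n] e2 seg_b R6[of v "[?Bi, ?A] @ [?Ai, ?B, ?A]" "SS n ?p"] by simp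
    have c: "reduce ([?Bi, ?A] @ [?Ai, ?B, ?A]) = [?A]" by (simp add: reduce_Cons reduce_Nil inv_letter_def)
    have f2: "v @ [?A] @ SS n ?p = v @ SS n (?p+1)" by (simp add: SSX)
    have oc: "v \<noteq> [] \<longrightarrow> rk n (last v) < 2*n+4*q+2"
      using old xo unfolding e2 by (simp only: cond_p2) auto
    have f3: "reduced (v @ [?A] @ SS n ?p)"
    proof -
      have "v \<noteq> [] \<longrightarrow> last v \<noteq> ?Ai" using oc rk_blk(3)[of n q] by auto
      moreover have "reduced (?A # SS n ?p)" using red_cons_SSp[of ?A q n] by simp
      ultimately show ?thesis using rv red_app_cons[of v ?A "SS n ?p"] by (simp add: inv_letter_def)
    qed
    have f4: "v \<noteq> [] \<longrightarrow> cond n (?p+1) (last v) ?A"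
      using oc by (simp only: cond_p1) auto
    show ?thesis by (rule finish[OF f1[unfolded c] f2 f3 f4])
  next
    case e3
    have f1: "reduce (v @ SS n s @ dual_exp n ?A) = reduce (v @ reduce ([?Ai, ?Bi, ?A] @ [?Ai, ?B, ?A]) @ SS n ?p)"
      using r0 G2[of ?p s v n] e3 seg_b R6[of v "[?Ai, ?Bi, ?A] @ [?Ai, ?B, ?A]" "SS n ?p"] by simp
    have c: "reduce ([?Ai, ?Bi, ?A] @ [?Ai, ?B, ?A]) = []" by (simp add: reduce_Cons reduce_Nil inv_letter_def)
    have oc: "v \<noteq> [] \<longrightarrow> 2*n+4*q+1 < rk n (last v)"
      using old xo unfolding e3 by (simp only: cond_p3) auto
    have f3: "reduced (v @ SS n ?p)" using red_v_SSp[OF rv] oc by auto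
    have f4: "v \<noteq> [] \<longrightarrow> cond n ?p (last v) ?A"
      using oc by (simp only: cond_p0) auto
    show ?thesis by (rule finish[OF f1[unfolded c append_Nil] _ f3 f4]) simp
  next
    case ge
    have sg: "seg n ?p s = seg n (?p+4) s @ seg n ?p (?p+4)" using ge by (intro seg_split) simp_all
    have f1: "reduce (v @ SS n s @ dual_exp n ?A) = reduce ((v @ seg n (?p+4) s) @ reduce ([?B, ?Ai, ?Bi, ?A] @ [?Ai, ?B, ?A]) @ SS n ?p)"
      using r0 G2[of ?p s v n] ge sg seg_b R6[of "v @ seg n (?p+4) s" "[?B, ?Ai, ?Bi, ?A] @ [?Ai, ?B, ?A]" "SS n ?p"] by simp
    have c: "reduce ([?B, ?Ai, ?Bi, ?A] @ [?Ai, ?B, ?A]) = [?B]" by (simp add: reduce_Cons reduce_Nil inv_letter_def)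
    have f3: "reduced ((v @ seg n (?p+4) s @ [?B]) @ SS n ?p)"
    proof (rule red_v_SSp)
      have "v @ SS n s = (v @ seg n (?p+4) s @ [?B]) @ [?Ai, ?Bi, ?A] @ SS n ?p"
        using SS_split[of "?p+4" s n] ge by (simp add: SSX)
      then show "reduced (v @ seg n (?p+4) s @ [?B])" using red reduced_prefix by metis
    qed (simp add: rk_blk)
    have f4: "cond n ?p (last (v @ seg n (?p+4) s @ [?B])) ?A"
      by (simp only: cond_p0) (simp add: rk_blk)
    show ?thesis by (rule finish2[where v'="v @ seg n (?p+4) s @ [?B]" and s'="?p"]) (use f1 c f3 f4 in simp_all)
  qed
qed

lemma SS_b5: "SS n (n+4*q+5) = (Ag (Suc (Suc q)), True) # SS n (n+4*q+4)"
proof -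
  have e: "n+4*q+5 = Suc (n+4*q+4)" by simp
  have "dd n (Suc (n+4*q+4)) = (Ag (Suc (Suc q)), True)" by (rule dd_Suc5)
  then show ?thesis unfolding e by (simp only: SS_Suc)
qed

lemma last_inv_seg: "a < b \<Longrightarrow> last (v @ inv_word (seg n a b)) = inv_letter (dd n b)"
proof -
  assume ab: "a < b"
  have "seg n a b \<noteq> []" "hd (seg n a b) = dd n b" using seg_last[OF ab] seg_hd[OF ab] by auto
  then show ?thesis by (simp add: inv_word_def last_map last_rev hd_map)
qed

lemma step_AN:
  assumes red: "reduced (v @ SS n s)"
    and old: "v \<noteq> [] \<longrightarrow> cond n s (last v) xo"
    and xne: "(Ag (Suc q), False) \<noteq> inv_letter xo"
  shows "\<exists>v' s'. reduce (v @ SS n s @ dual_exp n (Ag (Suc q), False)) = v' @ SS n s' \<and>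
           (v' \<noteq> [] \<longrightarrow> cond n s' (last v') (Ag (Suc q), False))"
proof -
  let ?A = "(Ag (Suc q), True)" and ?Ai = "(Ag (Suc q), False)"
  let ?B = "(Bg (Suc q), True)" and ?Bi = "(Bg (Suc q), False)"
  let ?p = "n + 4*q"
  have xo: "xo \<noteq> ?A" using xne by (auto simp: inv_letter_def)
  have r0: "reduce (v @ SS n s @ dual_exp n ?Ai) = reduce (v @ SS n s @ inv_word (SS n ?p) @ [?Ai, ?Bi, ?A] @ SS n ?p)"
    using dexp_AN[of "v @ SS n s" n q] by simp
  have lv: "v \<noteq> [] \<longrightarrow> last v \<noteq> dd n (Suc s)" using old cond_ne by blast
  have rv: "reduced v" using red by (rule reduced_prefix)
  consider (lt) "s < ?p" | (eq) "s = ?p" | (e1) "s = ?p+1" | (ge) "?p+2 \<le> s" by linarith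
  then show ?thesis
  proof cases
    case lt
    then have le: "s \<le> ?p" by simp
    have f1: "reduce (v @ SS n s @ dual_exp n ?Ai) = reduce ((v @ inv_word (seg n s ?p)) @ SS n (?p+3))"
      using r0 G1[OF le] by (simp add: SSX)
    have f3: "reduced ((v @ inv_word (seg n s ?p)) @ SS n (?p+3))"
    proof -
      have "reduced (v @ inv_word (seg n s ?p) @ [?Ai, ?Bi, ?A] @ SS n ?p)"
      proof (rule G_red[OF red le lv])
        show "reduced ([?Ai, ?Bi, ?A] @ SS n ?p)" using red_cons_SSp[of ?A q n] by (simp add: inv_letter_def)
      qed (simp_all add: dd_Suc1 inv_letter_def)
      then show ?thesis by (simp add: SSX)
    qed
    have f4: "cond n (?p+3) (last (v @ inv_word (seg n s ?p))) ?Ai"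
    proof -
      have "last (v @ inv_word (seg n s ?p)) = inv_letter (dd n ?p)" using lt by (rule last_inv_seg)
      moreover have "rk n (inv_letter (dd n ?p)) < 2*n+4*q" using lt by (intro rk_inv_dd_p) simp
      ultimately show ?thesis by (simp only: cond_p3) simp
    qed
    show ?thesis by (rule finish2[where v'="v @ inv_word (seg n s ?p)" and s'="?p+3"]) (use f1 f3 f4 in simp_all)
  next
    case eq
    have f1: "reduce (v @ SS n s @ dual_exp n ?Ai) = reduce (v @ SS n (?p+3))"
      using r0 G1[of s ?p v n] eq by (simp add: SSX)
    have oc: "v \<noteq> [] \<longrightarrow> rk n (last v) < 2*n+4*q"
      using old xo unfolding eq by (simp only: cond_p0) auto
    have f3: "reduced (v @ SS n (?p+3))"
    proof -
      have "reduced (?Ai # ?Bi # ?A # SS n ?p)" using red_cons_SSp[of ?A q n] by (simp add: inv_letter_def)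
      moreover have "v \<noteq> [] \<longrightarrow> last v \<noteq> inv_letter ?Ai" using oc rk_blk(1)[of n q] by (auto simp: inv_letter_def)
      ultimately show ?thesis using rv red_app_cons[of v ?Ai "?Bi # ?A # SS n ?p"] by (simp add: SSX)
    qed
    have f4: "v \<noteq> [] \<longrightarrow> cond n (?p+3) (last v) ?Ai"
      using oc by (simp only: cond_p3) auto
    show ?thesis by (rule finish2[OF f1 f3 f4])
  next
    case e1
    have f1: "reduce (v @ SS n s @ dual_exp n ?Ai) = reduce (v @ reduce ([?A] @ [?Ai, ?Bi, ?A]) @ SS n ?p)"
      using r0 G2[of ?p s v n] e1 seg_b R6[of v "[?A] @ [?Ai, ?Bi, ?A]" "SS n ?p"] by simp
    have c: "reduce ([?A] @ [?Ai, ?Bi, ?A]) = [?Bi, ?A]" by (simp add: reduce_Cons reduce_Nil inv_letter_def)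
    have oc: "v \<noteq> [] \<longrightarrow> 2*n+4*q+3 < rk n (last v)"
      using old xo unfolding e1 by (simp only: cond_p1) auto
    have f3: "reduced (v @ SS n (?p+2))"
    proof -
      have "reduced (?Bi # ?A # SS n ?p)" using red_cons_SSp[of ?A q n] by (simp add: inv_letter_def)
      moreover have "v \<noteq> [] \<longrightarrow> last v \<noteq> inv_letter ?Bi" using oc rk_blk(2)[of n q] by (auto simp: inv_letter_def)
      ultimately show ?thesis using rv red_app_cons[of v ?Bi "?A # SS n ?p"] by (simp add: SSX)
    qed
    have f4: "v \<noteq> [] \<longrightarrow> cond n (?p+2) (last v) ?Ai"
      using oc by (simp only: cond_p2) auto
    show ?thesis by (rule finish2[OF _ f3 f4]) (use f1 c in \<open>simp add: SSX\<close>)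
  next
    case ge
    have sg: "seg n ?p s = seg n (?p+2) s @ seg n ?p (?p+2)" using ge by (intro seg_split) simp_all
    have f1: "reduce (v @ SS n s @ dual_exp n ?Ai) = reduce ((v @ seg n (?p+2) s) @ reduce ([?Bi, ?A] @ [?Ai, ?Bi, ?A]) @ SS n ?p)"
      using r0 G2[of ?p s v n] ge sg seg_b R6[of "v @ seg n (?p+2) s" "[?Bi, ?A] @ [?Ai, ?Bi, ?A]" "SS n ?p"] by simp
    have c: "reduce ([?Bi, ?A] @ [?Ai, ?Bi, ?A]) = [?Bi, ?Bi, ?A]" by (simp add: reduce_Cons reduce_Nil inv_letter_def)
    have f3: "reduced ((v @ seg n (?p+2) s @ [?Bi]) @ SS n (?p+2))"
    proof -
      have "v @ SS n s = (v @ seg n (?p+2) s @ [?Bi]) @ [?A] @ SS n ?p"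
        using SS_split[of "?p+2" s n] ge by (simp add: SSX)
      then have "reduced (v @ seg n (?p+2) s @ [?Bi])" using red reduced_prefix by metis
      moreover have "reduced (?Bi # ?A # SS n ?p)" using red_cons_SSp[of ?A q n] by (simp add: inv_letter_def)
      ultimately show ?thesis using red_app_cons[of "v @ seg n (?p+2) s @ [?Bi]" ?Bi "?A # SS n ?p"]
        by (simp add: SSX inv_letter_def)
    qed
    have f4: "cond n (?p+2) (last (v @ seg n (?p+2) s @ [?Bi])) ?Ai"
      by (simp only: cond_p2) (simp add: rk_blk)
    show ?thesis by (rule finish2[where v'="v @ seg n (?p+2) s @ [?Bi]" and s'="?p+2"])
       (use f1 c f3 f4 in \<open>simp_all add: SSX\<close>)
  qed
qed

lemma step_BP:
  assumes red: "reduced (v @ SS n s)"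
    and old: "v \<noteq> [] \<longrightarrow> cond n s (last v) xo"
    and xne: "(Bg (Suc q), True) \<noteq> inv_letter xo"
  shows "\<exists>v' s'. reduce (v @ SS n s @ dual_exp n (Bg (Suc q), True)) = v' @ SS n s' \<and>
           (v' \<noteq> [] \<longrightarrow> cond n s' (last v') (Bg (Suc q), True))"
proof -
  let ?A = "(Ag (Suc q), True)" and ?Ai = "(Ag (Suc q), False)"
  let ?B = "(Bg (Suc q), True)" and ?Bi = "(Bg (Suc q), False)"
  let ?A' = "(Ag (Suc (Suc q)), True)"
  let ?p = "n + 4*q"
  let ?C = "[?Ai, ?B, ?A, ?Bi, ?A]"
  have xo: "xo \<noteq> ?Bi" using xne by (auto simp: inv_letter_def)
  have r0: "reduce (v @ SS n s @ dual_exp n ?B) = reduce (v @ SS n s @ inv_word (SS n ?p) @ ?C @ SS n ?p)"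
    by (simp add: dexp_BP)
  have lv: "v \<noteq> [] \<longrightarrow> last v \<noteq> dd n (Suc s)" using old cond_ne by blast
  have rv: "reduced v" using red by (rule reduced_prefix)
  have rC: "reduced (?C @ SS n ?p)" using red_cons_SSp[of ?A q n] by (simp add: inv_letter_def)
  consider (le) "s \<le> ?p" | (e1) "s = ?p+1" | (e2) "s = ?p+2" | (e3) "s = ?p+3" | (e4) "s = ?p+4"
    | (ge) "?p+5 \<le> s" by linarith
  then show ?thesis
  proof cases
    case le
    have f1: "reduce (v @ SS n s @ dual_exp n ?B) = reduce ((v @ inv_word (seg n s ?p) @ [?Ai, ?B, ?A]) @ SS n (?p+2))"
      using r0 G1[OF le] by (simp add: SSX)
    have f3: "reduced ((v @ inv_word (seg n s ?p) @ [?Ai, ?B, ?A]) @ SS n (?p+2))"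
    proof -
      have "reduced (v @ inv_word (seg n s ?p) @ ?C @ SS n ?p)"
        by (rule G_red[OF red le lv rC]) (simp_all add: dd_Suc1 inv_letter_def)
      then show ?thesis by (simp add: SSX)
    qed
    have f4: "cond n (?p+2) (last (v @ inv_word (seg n s ?p) @ [?Ai, ?B, ?A])) ?B"
      by (simp only: cond_p2) (simp add: rk_blk)
    show ?thesis by (rule finish2[OF f1 f3]) (use f4 in simp)
  next
    case e1
    have f1: "reduce (v @ SS n s @ dual_exp n ?B) = reduce (v @ reduce ([?A] @ ?C) @ SS n ?p)"
      using r0 G2[of ?p s v n] e1 seg_b R6[of v "[?A] @ ?C" "SS n ?p"] by simp
    have c: "reduce ([?A] @ ?C) = [?B, ?A, ?Bi, ?A]" by (simp add: reduce_Cons reduce_Nil inv_letter_def)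
    have f3: "reduced ((v @ [?B, ?A]) @ SS n (?p+2))"
    proof -
      have "v \<noteq> [] \<longrightarrow> last v \<noteq> ?Bi" using lv e1 by (simp only: dd_Suc2)
      moreover have "reduced (?B # ?A # ?Bi # ?A # SS n ?p)" using rC by (simp add: inv_letter_def)
      ultimately show ?thesis using rv red_app_cons[of v ?B "?A # ?Bi # ?A # SS n ?p"] by (simp add: SSX inv_letter_def)
    qed
    have f4: "cond n (?p+2) (last (v @ [?B, ?A])) ?B"
      by (simp only: cond_p2) (simp add: rk_blk)
    show ?thesis by (rule finish2[OF _ f3]) (use f1 c f4 in \<open>simp_all add: SSX\<close>)
  next
    case e2
    have f1: "reduce (v @ SS n s @ dual_exp n ?B) = reduce (v @ reduce ([?Bi, ?A] @ ?C) @ SS n ?p)"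
      using r0 G2[of ?p s v n] e2 seg_b R6[of v "[?Bi, ?A] @ ?C" "SS n ?p"] by simp
    have c: "reduce ([?Bi, ?A] @ ?C) = [?A, ?Bi, ?A]" by (simp add: reduce_Cons reduce_Nil inv_letter_def)
    have f3: "reduced ((v @ [?A]) @ SS n (?p+2))"
    proof -
      have "v \<noteq> [] \<longrightarrow> last v \<noteq> ?Ai" using lv e2 by (simp only: dd_Suc3)
      moreover have "reduced (?A # ?Bi # ?A # SS n ?p)" using rC by (simp add: inv_letter_def)
      ultimately show ?thesis using rv red_app_cons[of v ?A "?Bi # ?A # SS n ?p"] by (simp add: SSX inv_letter_def)
    qed
    have f4: "cond n (?p+2) (last (v @ [?A])) ?B"
      by (simp only: cond_p2) (simp add: rk_blk)
    show ?thesis by (rule finish2[OF _ f3]) (use f1 c f4 in \<open>simp_all add: SSX\<close>)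
  next
    case e3
    have f1: "reduce (v @ SS n s @ dual_exp n ?B) = reduce (v @ reduce ([?Ai, ?Bi, ?A] @ ?C) @ SS n ?p)"
      using r0 G2[of ?p s v n] e3 seg_b R6[of v "[?Ai, ?Bi, ?A] @ ?C" "SS n ?p"] by simp
    have c: "reduce ([?Ai, ?Bi, ?A] @ ?C) = [?Bi, ?A]" by (simp add: reduce_Cons reduce_Nil inv_letter_def)
    have oc: "v \<noteq> [] \<longrightarrow> rk n (last v) < 2*n+4*q+1"
      using old xo unfolding e3 by (simp only: cond_p3) auto
    have f3: "reduced (v @ SS n (?p+2))"
    proof -
      have "v \<noteq> [] \<longrightarrow> last v \<noteq> ?B" using oc rk_blk(2)[of n q] by auto
      moreover have "reduced (?Bi # ?A # SS n ?p)" using rC by (simp add: inv_letter_def)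
      ultimately show ?thesis using rv red_app_cons[of v ?Bi "?A # SS n ?p"] by (simp add: SSX inv_letter_def)
    qed
    have f4: "v \<noteq> [] \<longrightarrow> cond n (?p+2) (last v) ?B"
      using oc by (simp only: cond_p2) auto
    show ?thesis by (rule finish2[OF _ f3 f4]) (use f1 c in \<open>simp add: SSX\<close>)
  next
    case e4
    have f1: "reduce (v @ SS n s @ dual_exp n ?B) = reduce (v @ reduce ([?B, ?Ai, ?Bi, ?A] @ ?C) @ SS n ?p)"
      using r0 G2[of ?p s v n] e4 seg_b R6[of v "[?B, ?Ai, ?Bi, ?A] @ ?C" "SS n ?p"] by simp
    have c: "reduce ([?B, ?Ai, ?Bi, ?A] @ ?C) = [?A]" by (simp add: reduce_Cons reduce_Nil inv_letter_def)
    have oc: "v \<noteq> [] \<longrightarrow> 2*n+4*q+4 < rk n (last v)"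
      using old xo unfolding e4 by (simp only: cond_p4) auto
    have f3: "reduced (v @ SS n (?p+1))"
    proof -
      have "v \<noteq> [] \<longrightarrow> last v \<noteq> ?Ai" using oc rk_blk(3)[of n q] by auto
      moreover have "reduced (?A # SS n ?p)" using red_cons_SSp[of ?A q n] by simp
      ultimately show ?thesis using rv red_app_cons[of v ?A "SS n ?p"] by (simp add: SSX inv_letter_def)
    qed
    have f4: "v \<noteq> [] \<longrightarrow> cond n (?p+1) (last v) ?B"
      using oc by (simp only: cond_p1) auto
    show ?thesis by (rule finish2[OF _ f3 f4]) (use f1 c in \<open>simp add: SSX\<close>)
  next
    case ge
    have sg: "seg n ?p s = seg n (?p+5) s @ seg n ?p (?p+5)" using ge by (intro seg_split) simp_all
    have f1: "reduce (v @ SS n s @ dual_exp n ?B) = reduce ((v @ seg n (?p+5) s) @ reduce ([?A', ?B, ?Ai, ?Bi, ?A] @ ?C) @ SS n ?p)"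
      using r0 G2[of ?p s v n] ge sg seg_b R6[of "v @ seg n (?p+5) s" "[?A', ?B, ?Ai, ?Bi, ?A] @ ?C" "SS n ?p"] by simp
    have c: "reduce ([?A', ?B, ?Ai, ?Bi, ?A] @ ?C) = [?A', ?A]" by (simp add: reduce_Cons reduce_Nil inv_letter_def)
    have f3: "reduced ((v @ seg n (?p+5) s @ [?A']) @ SS n (?p+1))"
    proof -
      have "v @ SS n s = (v @ seg n (?p+5) s @ [?A']) @ SS n (?p+4)"
        using SS_split[of "?p+5" s n] ge by (simp add: SS_b5)
      then have "reduced (v @ seg n (?p+5) s @ [?A'])" using red reduced_prefix by metis
      moreover have "reduced (?A # SS n ?p)" using red_cons_SSp[of ?A q n] by simp
      ultimately show ?thesis using red_app_cons[of "v @ seg n (?p+5) s @ [?A']" ?A "SS n ?p"]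
        by (simp add: SSX inv_letter_def)
    qed
    have f4: "cond n (?p+1) (last (v @ seg n (?p+5) s @ [?A'])) ?B"
      by (simp only: cond_p1) (simp add: rk_blk)
    show ?thesis by (rule finish2[where v'="v @ seg n (?p+5) s @ [?A']" and s'="?p+1"])
       (use f1 c f3 f4 in \<open>simp_all add: SSX\<close>)
  qed
qed

lemma step_BN:
  assumes red: "reduced (v @ SS n s)"
    and old: "v \<noteq> [] \<longrightarrow> cond n s (last v) xo"
    and xne: "(Bg (Suc q), False) \<noteq> inv_letter xo"
  shows "\<exists>v' s'. reduce (v @ SS n s @ dual_exp n (Bg (Suc q), False)) = v' @ SS n s' \<and>
           (v' \<noteq> [] \<longrightarrow> cond n s' (last v') (Bg (Suc q), False))"
proof -
  let ?A = "(Ag (Suc q), True)" and ?Ai = "(Ag (Suc q), False)"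
  let ?B = "(Bg (Suc q), True)" and ?Bi = "(Bg (Suc q), False)"
  let ?p = "n + 4*q"
  let ?C = "[?Ai, ?B, ?Ai, ?Bi, ?A]"
  have xo: "xo \<noteq> ?B" using xne by (auto simp: inv_letter_def)
  have r0: "reduce (v @ SS n s @ dual_exp n ?Bi) = reduce (v @ SS n s @ inv_word (SS n ?p) @ ?C @ SS n ?p)"
    by (simp add: dexp_BN)
  have lv: "v \<noteq> [] \<longrightarrow> last v \<noteq> dd n (Suc s)" using old cond_ne by blast
  have rv: "reduced v" using red by (rule reduced_prefix)
  have rC: "reduced (?C @ SS n ?p)" using red_cons_SSp[of ?A q n] by (simp add: inv_letter_def)
  consider (le) "s \<le> ?p" | (e1) "s = ?p+1" | (e2) "s = ?p+2" | (ge) "?p+3 \<le> s" by linarith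
  then show ?thesis
  proof cases
    case le
    have f1: "reduce (v @ SS n s @ dual_exp n ?Bi) = reduce ((v @ inv_word (seg n s ?p) @ [?Ai]) @ SS n (?p+4))"
      using r0 G1[OF le] by (simp add: SSX)
    have f3: "reduced ((v @ inv_word (seg n s ?p) @ [?Ai]) @ SS n (?p+4))"
    proof -
      have "reduced (v @ inv_word (seg n s ?p) @ ?C @ SS n ?p)"
        by (rule G_red[OF red le lv rC]) (simp_all add: dd_Suc1 inv_letter_def)
      then show ?thesis by (simp add: SSX)
    qed
    have f4: "cond n (?p+4) (last (v @ inv_word (seg n s ?p) @ [?Ai])) ?Bi"
      by (simp only: cond_p4) (simp add: rk_blk)
    show ?thesis by (rule finish2[OF f1 f3]) (use f4 in simp)
  next
    case e1
    have f1: "reduce (v @ SS n s @ dual_exp n ?Bi) = reduce (v @ reduce ([?A] @ ?C) @ SS n ?p)"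
      using r0 G2[of ?p s v n] e1 seg_b R6[of v "[?A] @ ?C" "SS n ?p"] by simp
    have c: "reduce ([?A] @ ?C) = [?B, ?Ai, ?Bi, ?A]" by (simp add: reduce_Cons reduce_Nil inv_letter_def)
    have oc: "v \<noteq> [] \<longrightarrow> rk n (last v) < 2*n+4*q+3"
      using old xo unfolding e1 by (simp only: cond_p1) auto
    have f3: "reduced (v @ SS n (?p+4))"
    proof -
      have "v \<noteq> [] \<longrightarrow> last v \<noteq> ?Bi" using oc rk_blk(4)[of n q] by auto
      moreover have "reduced (?B # ?Ai # ?Bi # ?A # SS n ?p)" using rC by (simp add: inv_letter_def)
      ultimately show ?thesis using rv red_app_cons[of v ?B "?Ai # ?Bi # ?A # SS n ?p"] by (simp add: SSX inv_letter_def)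
    qed
    have f4: "v \<noteq> [] \<longrightarrow> cond n (?p+4) (last v) ?Bi"
      using oc by (simp only: cond_p4) auto
    show ?thesis by (rule finish2[OF _ f3 f4]) (use f1 c in \<open>simp add: SSX\<close>)
  next
    case e2
    have f1: "reduce (v @ SS n s @ dual_exp n ?Bi) = reduce (v @ reduce ([?Bi, ?A] @ ?C) @ SS n ?p)"
      using r0 G2[of ?p s v n] e2 seg_b R6[of v "[?Bi, ?A] @ ?C" "SS n ?p"] by simp
    have c: "reduce ([?Bi, ?A] @ ?C) = [?Ai, ?Bi, ?A]" by (simp add: reduce_Cons reduce_Nil inv_letter_def)
    have oc: "v \<noteq> [] \<longrightarrow> 2*n+4*q+2 < rk n (last v)"
      using old xo unfolding e2 by (simp only: cond_p2) auto
    have f3: "reduced (v @ SS n (?p+3))"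
    proof -
      have "v \<noteq> [] \<longrightarrow> last v \<noteq> ?A" using oc rk_blk(1)[of n q] by auto
      moreover have "reduced (?Ai # ?Bi # ?A # SS n ?p)" using rC by (simp add: inv_letter_def)
      ultimately show ?thesis using rv red_app_cons[of v ?Ai "?Bi # ?A # SS n ?p"] by (simp add: SSX inv_letter_def)
    qed
    have f4: "v \<noteq> [] \<longrightarrow> cond n (?p+3) (last v) ?Bi"
      using oc by (simp only: cond_p3) auto
    show ?thesis by (rule finish2[OF _ f3 f4]) (use f1 c in \<open>simp add: SSX\<close>)
  next
    case ge
    have sg: "seg n ?p s = seg n (?p+3) s @ seg n ?p (?p+3)" using ge by (intro seg_split) simp_all
    have f1: "reduce (v @ SS n s @ dual_exp n ?Bi) = reduce ((v @ seg n (?p+3) s) @ reduce ([?Ai, ?Bi, ?A] @ ?C) @ SS n ?p)"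
      using r0 G2[of ?p s v n] ge sg seg_b R6[of "v @ seg n (?p+3) s" "[?Ai, ?Bi, ?A] @ ?C" "SS n ?p"] by simp
    have c: "reduce ([?Ai, ?Bi, ?A] @ ?C) = [?Ai, ?Ai, ?Bi, ?A]" by (simp add: reduce_Cons reduce_Nil inv_letter_def)
    have f3: "reduced ((v @ seg n (?p+3) s @ [?Ai]) @ SS n (?p+3))"
    proof -
      have "v @ SS n s = (v @ seg n (?p+3) s @ [?Ai]) @ [?Bi, ?A] @ SS n ?p"
        using SS_split[of "?p+3" s n] ge by (simp add: SSX)
      then have "reduced (v @ seg n (?p+3) s @ [?Ai])" using red reduced_prefix by metis
      moreover have "reduced (?Ai # ?Bi # ?A # SS n ?p)" using rC by (simp add: inv_letter_def)
      ultimately show ?thesis using red_app_cons[of "v @ seg n (?p+3) s @ [?Ai]" ?Ai "?Bi # ?A # SS n ?p"]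
        by (simp add: SSX inv_letter_def)
    qed
    have f4: "cond n (?p+3) (last (v @ seg n (?p+3) s @ [?Ai])) ?Bi"
      by (simp only: cond_p3) (simp add: rk_blk)
    show ?thesis by (rule finish2[where v'="v @ seg n (?p+3) s @ [?Ai]" and s'="?p+3"])
       (use f1 c f3 f4 in \<open>simp_all add: SSX\<close>)
  qed
qed

lemma SS_mi: "1 \<le> i \<Longrightarrow> i \<le> n \<Longrightarrow> SS n i = (Mg i, True) # SS n (i - 1)"
  by (cases i) (auto simp: SS_Suc dd_M)

lemma seg_m1: "1 \<le> i \<Longrightarrow> i \<le> n \<Longrightarrow> seg n (i - 1) i = [(Mg i, True)]"
  by (cases i) (auto simp: seg_Suc dd_M)

lemma seg_m2: "1 \<le> i \<Longrightarrow> i \<le> n \<Longrightarrow> seg n (i - 1) (Suc i) = [dd n (Suc i), (Mg i, True)]"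
  by (cases i) (auto simp: seg_Suc dd_M)

lemma cond_m0: "1 \<le> i \<Longrightarrow> i \<le> n \<Longrightarrow> cond n (i - 1) z x \<longleftrightarrow> rk n z \<noteq> 2*i-2 \<and>
   (rk n z < 2*i-2 \<longrightarrow> x = psi' (dd n (i - 1))) \<and> (2*i-2 < rk n z \<longrightarrow> x = (Mg i, True))"
proof -
  assume i: "1 \<le> i" "i \<le> n"
  then have e: "Suc (i - 1) = i" by simp
  show ?thesis unfolding cond_def e using i by (simp add: dd_M rk_def psi_def)
qed

lemma cond_m1: "1 \<le> i \<Longrightarrow> i \<le> n \<Longrightarrow> cond n i z x \<longleftrightarrow> rk n z \<noteq> 2*i \<and>
   (rk n z < 2*i \<longrightarrow> x = (Mg i, False)) \<and> (2*i < rk n z \<longrightarrow> x = psi (dd n (Suc i)))"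
  unfolding cond_def by (simp add: dd_Suc_M dd_M psi'_def)

lemma dd_Suc_not_M: "1 \<le> i \<Longrightarrow> i \<le> n \<Longrightarrow> fst (dd n (Suc i)) \<noteq> Mg (i - 1)"
proof (cases "Suc i \<le> n")
  case True then show ?thesis by (simp add: dd_M)
next
  case False
  assume "i \<le> n"
  then have "Suc i = n + 4*0 + 1" using False by simp
  then have "dd n (Suc i) = (Ag 1, True)" by (simp only: dd_1) simp
  then show ?thesis by simp
qed

lemma red_v_SSm: "1 \<le> i \<Longrightarrow> i \<le> n \<Longrightarrow> reduced v \<Longrightarrow> (v \<noteq> [] \<longrightarrow> last v \<noteq> (Mg (i - 1), False)) \<Longrightarrow>
   reduced (v @ SS n (i - 1))"
proof (cases "i = 1")
  case False
  assume i: "1 \<le> i" "i \<le> n" and rv: "reduced v" and h: "v \<noteq> [] \<longrightarrow> last v \<noteq> (Mg (i - 1), False)"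
  have "SS n (i - 1) = (Mg (i - 1), True) # SS n (i - 1 - 1)" using i False by (intro SS_mi) simp_all
  moreover have "reduced (SS n (i - 1))" by (rule reduced_SS)
  ultimately show ?thesis using red_app_cons[OF rv, of "(Mg (i - 1), True)" "SS n (i - 1 - 1)"] h
    by (simp add: inv_letter_def)
qed simp

lemma step_MP:
  assumes i: "1 \<le> i" "i \<le> n"
    and red: "reduced (v @ SS n s)"
    and old: "v \<noteq> [] \<longrightarrow> cond n s (last v) xo"
    and xne: "(Mg i, True) \<noteq> inv_letter xo"
  shows "\<exists>v' s'. reduce (v @ SS n s @ dual_exp n (Mg i, True)) = v' @ SS n s' \<and>
           (v' \<noteq> [] \<longrightarrow> cond n s' (last v') (Mg i, True))"
proof -
  let ?M = "(Mg i, True)" and ?Mi = "(Mg i, False)"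
  have xo: "xo \<noteq> ?Mi" using xne by (auto simp: inv_letter_def)
  have r0: "reduce (v @ SS n s @ dual_exp n ?M) = reduce (v @ SS n s @ inv_word (SS n (i - 1)) @ [?Mi] @ SS n (i - 1))"
    using dexp_MP[OF i] by simp
  have lv: "v \<noteq> [] \<longrightarrow> last v \<noteq> dd n (Suc s)" using old cond_ne by blast
  have rv: "reduced v" using red by (rule reduced_prefix)
  have e: "Suc (i - 1) = i" using i by simp
  consider (le) "s \<le> i - 1" | (eq) "s = i" | (gt) "Suc i \<le> s" by linarith
  then show ?thesis
  proof cases
    case le
    have f1: "reduce (v @ SS n s @ dual_exp n ?M) = reduce ((v @ inv_word (seg n s (i - 1)) @ [?Mi]) @ SS n (i - 1))"
      using r0 G1[OF le] by simp
    have f3: "reduced ((v @ inv_word (seg n s (i - 1)) @ [?Mi]) @ SS n (i - 1))"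
    proof -
      have "reduced ([?Mi] @ SS n (i - 1))"
        using red_cons_SS[of "i - 1" n ?Mi] i by (cases "i = 1") (auto simp: dd_M inv_letter_def)
      then have "reduced (v @ inv_word (seg n s (i - 1)) @ [?Mi] @ SS n (i - 1))"
        by (rule G_red[OF red le lv]) (use i in \<open>simp_all add: e dd_M inv_letter_def\<close>)
      then show ?thesis by simp
    qed
    have f4: "cond n (i - 1) (last (v @ inv_word (seg n s (i - 1)) @ [?Mi])) ?M"
      using i by (simp only: cond_m0[OF i]) (auto simp: rk_def)
    show ?thesis by (rule finish2[OF f1 f3]) (use f4 in simp)
  next
    case eq
    have f1: "reduce (v @ SS n s @ dual_exp n ?M) = reduce (v @ reduce ([?M] @ [?Mi]) @ SS n (i - 1))"
      using r0 G2[of "i - 1" s v n] eq seg_m1[OF i] R6[of v "[?M] @ [?Mi]" "SS n (i - 1)"] by simp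
    have c: "reduce ([?M] @ [?Mi]) = []" by (simp add: reduce_Cons reduce_Nil inv_letter_def)
    have oc: "v \<noteq> [] \<longrightarrow> 2*i < rk n (last v)"
      using old xo unfolding eq by (simp only: cond_m1[OF i]) auto
    have f3: "reduced (v @ SS n (i - 1))"
    proof (rule red_v_SSm[OF i rv])
      have "rk n (Mg (i - 1), False) < 2*i" using i by (simp add: rk_def)
      then show "v \<noteq> [] \<longrightarrow> last v \<noteq> (Mg (i - 1), False)" using oc by auto
    qed
    have f4: "v \<noteq> [] \<longrightarrow> cond n (i - 1) (last v) ?M"
      using oc by (simp only: cond_m0[OF i]) auto
    show ?thesis by (rule finish2[OF _ f3 f4]) (use f1 c in simp)
  next
    case gt
    have sg: "seg n (i - 1) s = seg n (Suc i) s @ seg n (i - 1) (Suc i)" using gt by (intro seg_split) simp_all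
    have f1: "reduce (v @ SS n s @ dual_exp n ?M) = reduce ((v @ seg n (Suc i) s) @ reduce ([dd n (Suc i), ?M] @ [?Mi]) @ SS n (i - 1))"
      using r0 G2[of "i - 1" s v n] gt sg seg_m2[OF i] R6[of "v @ seg n (Suc i) s" "[dd n (Suc i), ?M] @ [?Mi]" "SS n (i - 1)"] by simp
    have c: "reduce ([dd n (Suc i), ?M] @ [?Mi]) = [dd n (Suc i)]" by (simp add: reduce_Cons reduce_Nil inv_letter_def)
    have f3: "reduced ((v @ seg n (Suc i) s @ [dd n (Suc i)]) @ SS n (i - 1))"
    proof (rule red_v_SSm[OF i])
      have "v @ SS n s = (v @ seg n (Suc i) s @ [dd n (Suc i)]) @ SS n i"
        using SS_split[of "Suc i" s n] gt by (simp add: SS_Suc)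
      then show "reduced (v @ seg n (Suc i) s @ [dd n (Suc i)])" using red reduced_prefix by metis
      show "v @ seg n (Suc i) s @ [dd n (Suc i)] \<noteq> [] \<longrightarrow> last (v @ seg n (Suc i) s @ [dd n (Suc i)]) \<noteq> (Mg (i - 1), False)"
        using dd_Suc_not_M[OF i] by auto
    qed
    have f4: "cond n (i - 1) (last (v @ seg n (Suc i) s @ [dd n (Suc i)])) ?M"
      using dd_Suc_M[OF i] i by (simp only: cond_m0[OF i]) auto
    show ?thesis by (rule finish2[where v'="v @ seg n (Suc i) s @ [dd n (Suc i)]" and s'="i - 1"])
       (use f1 c f3 f4 in simp_all)
  qed
qed

lemma step_MN:
  assumes i: "1 \<le> i" "i \<le> n"
    and red: "reduced (v @ SS n s)"
    and old: "v \<noteq> [] \<longrightarrow> cond n s (last v) xo"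
    and xne: "(Mg i, False) \<noteq> inv_letter xo"
  shows "\<exists>v' s'. reduce (v @ SS n s @ dual_exp n (Mg i, False)) = v' @ SS n s' \<and>
           (v' \<noteq> [] \<longrightarrow> cond n s' (last v') (Mg i, False))"
proof -
  let ?M = "(Mg i, True)" and ?Mi = "(Mg i, False)"
  have xo: "xo \<noteq> ?M" using xne by (auto simp: inv_letter_def)
  have r0: "reduce (v @ SS n s @ dual_exp n ?Mi) = reduce (v @ SS n s @ inv_word (SS n (i - 1)) @ [?M] @ SS n (i - 1))"
    using dexp_MN[OF i] by simp
  have lv: "v \<noteq> [] \<longrightarrow> last v \<noteq> dd n (Suc s)" using old cond_ne by blast
  have rv: "reduced v" using red by (rule reduced_prefix)
  have e: "Suc (i - 1) = i" using i by simp
  have si: "[?M] @ SS n (i - 1) = SS n i" using SS_mi[OF i] by simp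
  have rsi: "reduced (?M # SS n (i - 1))" using si reduced_SS[of n i] by simp
  consider (lt) "s < i - 1" | (eq) "s = i - 1" | (ge) "i \<le> s" by linarith
  then show ?thesis
  proof cases
    case lt
    then have le: "s \<le> i - 1" by simp
    have f1: "reduce (v @ SS n s @ dual_exp n ?Mi) = reduce ((v @ inv_word (seg n s (i - 1))) @ SS n i)"
      using r0 G1[OF le] si by simp
    have f3: "reduced ((v @ inv_word (seg n s (i - 1))) @ SS n i)"
    proof -
      have "reduced (v @ inv_word (seg n s (i - 1)) @ [?M] @ SS n (i - 1))"
        by (rule G_red[OF red le lv]) (use i lt rsi in \<open>simp_all add: e dd_M\<close>)
      then show ?thesis using si by simp
    qed
    have f4: "cond n i (last (v @ inv_word (seg n s (i - 1)))) ?Mi"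
    proof -
      have "last (v @ inv_word (seg n s (i - 1))) = inv_letter (dd n (i - 1))" using lt by (rule last_inv_seg)
      also have "\<dots> = (Mg (i - 1), False)" using i by (simp add: dd_M inv_letter_def)
      finally show ?thesis using i lt by (simp only: cond_m1[OF i]) (auto simp: rk_def)
    qed
    show ?thesis by (rule finish2[OF f1 f3]) (use f4 in simp)
  next
    case eq
    have f1: "reduce (v @ SS n s @ dual_exp n ?Mi) = reduce (v @ SS n i)"
      using r0 G1[of s "i - 1" v n] eq si by simp
    have oc: "v \<noteq> [] \<longrightarrow> rk n (last v) < 2*i-2"
      using old xo unfolding eq by (simp only: cond_m0[OF i]) auto
    have f3: "reduced (v @ SS n i)"
    proof -
      have "v \<noteq> [] \<longrightarrow> last v \<noteq> ?Mi" using oc by (auto simp: rk_def)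
      then show ?thesis using red_app_cons[OF rv, of ?M "SS n (i - 1)"] reduced_SS[of n i] si
        by (simp add: inv_letter_def)
    qed
    have f4: "v \<noteq> [] \<longrightarrow> cond n i (last v) ?Mi"
      using oc by (simp only: cond_m1[OF i]) auto
    show ?thesis by (rule finish2[OF f1 f3 f4])
  next
    case ge
    have sg: "seg n (i - 1) s = seg n i s @ seg n (i - 1) i" using ge by (intro seg_split) simp_all
    have f1: "reduce (v @ SS n s @ dual_exp n ?Mi) = reduce ((v @ seg n i s) @ reduce ([?M] @ [?M]) @ SS n (i - 1))"
      using r0 G2[of "i - 1" s v n] ge sg seg_m1[OF i] R6[of "v @ seg n i s" "[?M] @ [?M]" "SS n (i - 1)"] by simp
    have c: "reduce ([?M] @ [?M]) = [?M, ?M]" by (simp add: reduce_Cons reduce_Nil inv_letter_def)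
    have f3: "reduced ((v @ seg n i s @ [?M]) @ SS n i)"
    proof -
      have "v @ SS n s = (v @ seg n i s @ [?M]) @ SS n (i - 1)"
        using SS_split[of i s n] ge SS_mi[OF i] by simp
      then have "reduced (v @ seg n i s @ [?M])" using red reduced_prefix by metis
      then show ?thesis using red_app_cons[of "v @ seg n i s @ [?M]" ?M "SS n (i - 1)"] reduced_SS[of n i] si
        by (simp add: inv_letter_def)
    qed
    have f4: "cond n i (last (v @ seg n i s @ [?M])) ?Mi"
      using i by (simp only: cond_m1[OF i]) (auto simp: rk_def)
    show ?thesis by (rule finish2[where v'="v @ seg n i s @ [?M]" and s'="i"])
       (use f1 c f3 f4 si in simp_all)
  qed
qed

lemma vw_inv: "\<forall>l\<in>set w. valid_gen n g (fst l) \<Longrightarrow> \<forall>l\<in>set (inv_word w). valid_gen n g (fst l)"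
  by (auto simp: inv_word_def inv_letter_def)
lemma vw_hw: "k \<le> Suc g \<Longrightarrow> \<forall>l\<in>set (concat (map hword (rev [1..<k]))). valid_gen n g (fst l)"
  by (auto simp: hword_def valid_gen_def)
lemma vw_ms: "k \<le> n \<Longrightarrow> \<forall>l\<in>set (mseq k). valid_gen n g (fst l)"
  by (auto simp: mseq_def valid_gen_def)
lemma vw_Pw: "j \<le> g \<Longrightarrow> \<forall>l\<in>set (Pw n j). valid_gen n g (fst l)"
  unfolding Pw_def using vw_hw[of j g n] vw_ms[of n n g] by auto
lemma vw_P'w: "j \<le> g \<Longrightarrow> \<forall>l\<in>set (P'w n j). valid_gen n g (fst l)"
  unfolding P'w_def using vw_hw[of "Suc j" g n] vw_ms[of n n g] by auto

lemma dexp_valid: "valid_gen n g (fst x) \<Longrightarrow> \<forall>l\<in>set (dual_exp n x). valid_gen n g (fst l)"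
proof -
  assume v: "valid_gen n g (fst x)"
  obtain y b where x: "x = (y, b)" by (cases x)
  have hv: "\<forall>l\<in>set (hat_word n y). valid_gen n g (fst l)"
  proof (cases y)
    case (Mg i)
    then have i: "i \<le> n" using v x by (simp add: valid_gen_def)
    have m: "\<forall>l\<in>set (mseq (i - 1)). valid_gen n g (fst l)" by (rule vw_ms) (use i in simp)
    have vi: "valid_gen n g (Mg i)" using v x Mg by simp
    show ?thesis using Mg vw_inv[OF m] m vi by auto
  next
    case (Ag j)
    then have j: "j \<le> g" using v x by (simp add: valid_gen_def)
    have vi: "valid_gen n g (Bg j)" using v x Ag by (simp add: valid_gen_def)
    show ?thesis using Ag vw_inv[OF vw_P'w[OF j]] vw_Pw[OF j] vi by auto
  next
    case (Bg j)
    then have j: "j \<le> g" using v x by (simp add: valid_gen_def)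
    have vi: "valid_gen n g (Ag j)" using v x Bg by (simp add: valid_gen_def)
    show ?thesis using Bg vw_inv[OF vw_P'w[OF j]] vw_Pw[OF j] vi by auto
  qed
  show ?thesis using hv vw_inv[OF hv] x by (simp add: dual_exp_def)
qed

lemma step_all:
  assumes xv: "valid_gen n g (fst x)"
    and red: "reduced (v @ SS n s)"
    and old: "v \<noteq> [] \<longrightarrow> cond n s (last v) xo"
    and xne: "x \<noteq> inv_letter xo"
  shows "\<exists>v' s'. reduce (v @ SS n s @ dual_exp n x) = v' @ SS n s' \<and> (v' \<noteq> [] \<longrightarrow> cond n s' (last v') x)"
proof -
  obtain y b where x: "x = (y, b)" by (cases x)
  show ?thesis
  proof (cases y)
    case (Mg i)
    then have i: "1 \<le> i" "i \<le> n" using xv x by (auto simp: valid_gen_def)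
    show ?thesis
    proof (cases b)
      case True then show ?thesis using step_MP[OF i red old] xne x Mg by simp
    next
      case False then show ?thesis using step_MN[OF i red old] xne x Mg by simp
    qed
  next
    case (Ag j)
    then obtain q where q: "j = Suc q" using xv x by (cases j) (auto simp: valid_gen_def)
    show ?thesis
    proof (cases b)
      case True then show ?thesis using step_AP[OF red old, of q] xne x Ag q by simp
    next
      case False then show ?thesis using step_AN[OF red old, of q] xne x Ag q by simp
    qed
  next
    case (Bg j)
    then obtain q where q: "j = Suc q" using xv x by (cases j) (auto simp: valid_gen_def)
    show ?thesis
    proof (cases b)
      case True then show ?thesis using step_BP[OF red old, of q] xne x Bg q by simp
    next
      case False then show ?thesis using step_BN[OF red old, of q] xne x Bg q by simp
    qed
  qed
qed

lemma main_inv: "\<forall>l\<in>set du. valid_gen n g (fst l) \<Longrightarrow> reduced du \<Longrightarrow> du \<noteq> [] \<Longrightarrow>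
  INV n (dual_eval n du) (last du)"
proof (induction du rule: rev_induct)
  case Nil then show ?case by simp
next
  case (snoc x du0)
  have xv: "valid_gen n g (fst x)" using snoc.prems by simp
  have ev: "dual_eval n (du0 @ [x]) = reduce (dual_eval n du0 @ SS n 0 @ dual_exp n x)"
    unfolding dual_eval_def by (simp add: R5[of "concat (map (dual_exp n) du0)"])
  show ?case
  proof (cases "du0 = []")
    case True
    have red0: "reduced ([] @ SS n 0)" by simp
    have ne: "x \<noteq> inv_letter x" by (simp add: inv_letter_def prod_eq_iff)
    have "dual_eval n du0 = []" using True by (simp add: dual_eval_def reduce_def)
    then obtain v' s' where "dual_eval n (du0 @ [x]) = v' @ SS n s'" "v' \<noteq> [] \<longrightarrow> cond n s' (last v') x"
      using step_all[OF xv red0 _ ne] ev by auto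
    then show ?thesis using INV_intro by simp
  next
    case False
    have r0: "reduced du0" using snoc.prems(2) by (rule reduced_prefix)
    have IH: "INV n (dual_eval n du0) (last du0)" using snoc.IH snoc.prems r0 False by simp
    have xne: "x \<noteq> inv_letter (last du0)"
    proof
      assume "x = inv_letter (last du0)"
      then show False using snoc.prems(2) False by (auto simp: reduced_append)
    qed
    obtain v s where vs: "dual_eval n du0 = v @ SS n s" "v \<noteq> [] \<longrightarrow> last v \<noteq> dd n (Suc s)"
      using max_decomp by blast
    have red: "reduced (v @ SS n s)" using vs(1) reduce_reduced unfolding dual_eval_def by metis
    have old: "v \<noteq> [] \<longrightarrow> cond n s (last v) (last du0)"
    proof
      assume "v \<noteq> []"
      then have "dual_eval n du0 = butlast v @ [last v] @ SS n s" using vs(1) by simp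
      then show "cond n s (last v) (last du0)" using IH vs(2) \<open>v \<noteq> []\<close> unfolding INV_def by blast
    qed
    obtain v' s' where "reduce (v @ SS n s @ dual_exp n x) = v' @ SS n s'" "v' \<noteq> [] \<longrightarrow> cond n s' (last v') x"
      using step_all[OF xv red old xne] by blast
    moreover have "dual_eval n (du0 @ [x]) = reduce (v @ SS n s @ dual_exp n x)" using ev vs(1) by simp
    ultimately show ?thesis using INV_intro by simp
  qed
qed

lemma eval_valid: "\<forall>l\<in>set du. valid_gen n g (fst l) \<Longrightarrow> \<forall>l\<in>set (dual_eval n du). valid_gen n g (fst l)"
  using R4 dexp_valid unfolding dual_eval_def by fastforce

theorem lemma3p3:
  fixes n g :: nat and du w w' :: "letter list" and z :: letter
  assumes du_valid: "\<forall>l \<in> set du. valid_gen n g (fst l)"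
    and du_red: "reduced du"
    and du_ne: "du \<noteq> []"
    and form: "dual_eval n du = w @ [z] @ w'"
    and w_red: "reduced w" and w'_red: "reduced w'"
  shows
   "(\<forall>i. 1 \<le> i \<and> i \<le> n \<and> w' = mseq i \<and> last du \<noteq> (Mg i, False)
        \<longrightarrow> z \<in> pm (Ms (Suc i) n \<union> ABs 1 g))
  \<and> (\<forall>i. 1 \<le> i \<and> i \<le> n \<and> w' = mseq (i - 1) \<and> last du \<noteq> (Mg i, True)
        \<longrightarrow> z \<in> pm (Ms 1 (i - 1)) \<union> {(Mg i, True)})
  \<and> (\<forall>j. 1 \<le> j \<and> j \<le> g \<and> w' = Pw n j \<and> last du \<noteq> (Ag j, True)
        \<longrightarrow> z \<in> pm (Ms 1 n \<union> ABs 1 (j - 1)) \<union> {(Ag j, True)})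
  \<and> (\<forall>j. 1 \<le> j \<and> j \<le> g \<and> w' = (Ag j, True) # Pw n j \<and> last du \<noteq> (Ag j, True)
        \<longrightarrow> z \<in> {(Bg j, False)} \<union> pm (ABs (Suc j) g))
  \<and> (\<forall>j. 1 \<le> j \<and> j \<le> g \<and> w' = [(Ag j, False), (Bg j, False), (Ag j, True)] @ Pw n j
          \<and> last du \<noteq> (Ag j, False)
        \<longrightarrow> z \<in> {(Ag j, False)} \<union> pm ({Bg j} \<union> ABs (Suc j) g))
  \<and> (\<forall>j. 1 \<le> j \<and> j \<le> g \<and> w' = [(Bg j, False), (Ag j, True)] @ Pw n j
          \<and> last du \<noteq> (Ag j, False)
        \<longrightarrow> z \<in> pm (Ms 1 n \<union> ABs 1 (j - 1) \<union> {Ag j}))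
  \<and> (\<forall>j. 1 \<le> j \<and> j \<le> g \<and> w' = [(Bg j, False), (Ag j, True)] @ Pw n j
          \<and> last du \<noteq> (Bg j, True)
        \<longrightarrow> z \<in> {(Ag j, False), (Bg j, False)} \<union> pm (ABs (Suc j) g))
  \<and> (\<forall>j. 1 \<le> j \<and> j \<le> g \<and> w' = (Ag j, True) # Pw n j \<and> last du \<noteq> (Bg j, True)
        \<longrightarrow> z \<in> pm (Ms 1 n \<union> ABs 1 (j - 1)) \<union> {(Ag j, True)} \<union> pm {Bg j})
  \<and> (\<forall>j. 1 \<le> j \<and> j \<le> g \<and> w' = [(Ag j, False), (Bg j, False), (Ag j, True)] @ Pw n j
          \<and> last du \<noteq> (Bg j, False)
        \<longrightarrow> z \<in> pm (Ms 1 n \<union> ABs 1 (j - 1)) \<union> {(Bg j, True)})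
  \<and> (\<forall>j. 1 \<le> j \<and> j \<le> g \<and> w' = P'w n j \<and> last du \<noteq> (Bg j, False)
        \<longrightarrow> z \<in> pm (ABs (Suc j) g))"
proof (rule final_claims)
  show "INV n (dual_eval n du) (last du)" by (rule main_inv[OF du_valid du_red du_ne])
  show "reduced (dual_eval n du)" unfolding dual_eval_def by (rule reduce_reduced)
  show "dual_eval n du = w @ [z] @ w'" by (rule form)
  show "valid_gen n g (fst z)" using eval_valid[OF du_valid] form by simp
qed

end
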